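(* In the changepoint model of the context, let $f:\mathbb X\to\mathbb R^u$ be measurable and integrable with respect to all $H_{ji}$, and set $H^f_{ji}=\int f(x)\,H_{ji}(dx)$. Then for $0<i<n$, $$\mathbb E[f(X_i)\mid Y_{1:n}=y_{1:n}]=\mathbb E[f(X_{i+1})\mid Y_{1:n}=y_{1:n}]-\sum_{\ell=i+1}^{n-1}H^f_{i+1,\ell}\,\tilde c_{i+1,\ell}\,\tilde q_{\ell+1}-H^f_{i+1,n}\,\tilde c_{i+1,n}+\sum_{\ell=0}^{i}H^f_{\ell i}\,\tilde c_{\ell i}\,\tilde q_{i+1}.$$
   Context: Model: Let $n\ge 1$ and fix observed data $y_1,\dots,y_n$. Let $(\mathbb X,\mathcal X)$, $(\mathbb Y,\mathcal Y)$ be standard Borel spaces, $\psi$ a $\sigma$-finite measure on $(\mathbb Y,\mathcal Y)$, $\mathcal J$ a probability measure on $(\mathbb X,\mathcal X)$, and $q_{ji}\in[0,1]$ for $0\le j<i\le n$. The model consists of random variables $C_i\in\{0,\dots,i\}$, $X_i\in\mathbb X$, $Y_i\in\mathbb Y$, $i=1,\dots,n$, with joint law factorizing as: $P(C_1=0)=q_{01}$, $P(C_1=1)=1-q_{01}$; for $i\ge2$, $C_i$ depends on the past only through $C_{i-1}$, with $P(C_i=j\mid C_{i-1}=j)=q_{ji}$ and $P(C_i=i\mid C_{i-1}=j)=1-q_{ji}$ ($0\le j\le i-1$); $X_1\sim\mathcal J$ independent of $C_1$; for $i\ge 2$, $X_i$ depends on the past only through $(C_i,X_{i-1})$, with $X_i\sim\mathcal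 J$ if $C_i=i$ and $X_i=X_{i-1}$ if $C_i<i$; $Y_i$ depends on all other variables only through $X_i$, with density $p(Y_i=y\mid X_i=x)$ w.r.t. $\psi$. Assume $\int\prod_{\ell=j}^i p(Y_\ell=y_\ell\mid X_\ell=x)\,\mathcal J(dx)>0$ for all $0<j\le i\le n$. $Y_{a:b}=y_{a:b}$ abbreviates $Y_a=y_a,\dots,Y_b=y_b$. Notation: $H_{ji}=P(X_i\in\cdot\mid C_i=j,Y_{1:i}=y_{1:i})$; $\tilde c_{ji}=P(C_i=j\mid C_{i+1}=i+1,Y_{1:i}=y_{1:i})$ for $0<i<n$, and $\tilde c_{jn}=P(C_n=j\mid Y_{1:n}=y_{1:n})$; $\tilde q_i=P(C_i=i\mid Y_{1:n}=y_{1:n})$. *)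

theory Defs
  imports "HOL-Probability.Probability"
begin

(* A realisation of the hidden variables is a pair
   omega = (c, z): c is a changepoint path (c i = C_i for i = 1..n, c i = 0 otherwise),
   z \<in> X^{1..n} are i.i.d. J "segment values"; X_i = z (max C_i 1), i.e. the value drawn
   at the start of the current segment (segment starting before time 1 uses z 1). *)

definition cp_paths :: "nat \<Rightarrow> (nat \<Rightarrow> nat) set" where
  "cp_paths n = {c. (\<forall>i. c i \<le> i) \<and> (\<forall>i. i \<notin> {1..n} \<longrightarrow> c i = 0)
                    \<and> (\<forall>i\<in>{2..n}. c i = c (i - 1) \<or> c i = i)}"

(* prior probability of a path: P(C_1 = 0) = q 0 1, P(C_1 = 1) = 1 - q 0 1,
   P(C_i = j | C_{i-1} = j) = q j i, P(C_i = i | C_{i-1} = j) = 1 - q j i *)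
definition cp_weight :: "(nat \<Rightarrow> nat \<Rightarrow> real) \<Rightarrow> nat \<Rightarrow> (nat \<Rightarrow> nat) \<Rightarrow> real" where
  "cp_weight q n c = (\<Prod>i\<in>{1..n}.
      if i = 1 then (if c 1 = 0 then q 0 1 else 1 - q 0 1)
      else if c i = i then 1 - q (c (i - 1)) i else q (c i) i)"

definition cp_prior :: "(nat \<Rightarrow> nat \<Rightarrow> real) \<Rightarrow> nat \<Rightarrow> 'x measure
    \<Rightarrow> ((nat \<Rightarrow> nat) \<times> (nat \<Rightarrow> 'x)) measure" where
  "cp_prior q n J = point_measure (cp_paths n) (\<lambda>c. ennreal (cp_weight q n c))
                    \<Otimes>\<^sub>M (\<Pi>\<^sub>M i\<in>{1..n}. J)"

definition cp_C :: "nat \<Rightarrow> (nat \<Rightarrow> nat) \<times> (nat \<Rightarrow> 'x) \<Rightarrow> nat" where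
  "cp_C i \<omega> = fst \<omega> i"

definition cp_X :: "nat \<Rightarrow> (nat \<Rightarrow> nat) \<times> (nat \<Rightarrow> 'x) \<Rightarrow> 'x" where
  "cp_X i \<omega> = snd \<omega> (max (fst \<omega> i) 1)"

definition cp_lik :: "('x \<Rightarrow> 'y \<Rightarrow> real) \<Rightarrow> (nat \<Rightarrow> 'y) \<Rightarrow> nat
    \<Rightarrow> (nat \<Rightarrow> nat) \<times> (nat \<Rightarrow> 'x) \<Rightarrow> real" where
  "cp_lik p y m \<omega> = (\<Prod>l\<in>{1..m}. p (cp_X l \<omega>) (y l))"

definition normalize_by :: "'a measure \<Rightarrow> ('a \<Rightarrow> real) \<Rightarrow> 'a measure" where
  "normalize_by M g = density M (\<lambda>\<omega>. ennreal (g \<omega>) / (\<integral>\<^sup>+\<omega>'. ennreal (g \<omega>') \<partial>M))"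

definition cond_on :: "'a measure \<Rightarrow> 'a set \<Rightarrow> 'a measure" where
  "cond_on M A = (if emeasure M A = 0 then null_measure M
                  else density M (\<lambda>\<omega>. indicator A \<omega> / emeasure M A))"

definition cp_post where
  "cp_post q n J p y m = normalize_by (cp_prior q n J) (cp_lik p y m)"

definition cp_ev where
  "cp_ev q n J i j = {\<omega> \<in> space (cp_prior q n J). cp_C i \<omega> = j}"

definition cp_H where
  "cp_H q n J p y j i = distr (cond_on (cp_post q n J p y i) (cp_ev q n J i j)) J (cp_X i)"

definition cp_ct where
  "cp_ct q n J p y j i =
     (if i < n then measure (cond_on (cp_post q n J p y i) (cp_ev q n J (i + 1) (i + 1))) (cp_ev q n J i j)
      else measure (cp_post q n J p y n) (cp_ev q n J n j))"

definition cp_qt where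
  "cp_qt q n J p y i = measure (cp_post q n J p y n) (cp_ev q n J i i)"

end

theory Submission
  imports Defs
begin


definition phiw :: "(nat \<Rightarrow> nat \<Rightarrow> real) \<Rightarrow> (nat \<Rightarrow> nat) \<Rightarrow> nat \<Rightarrow> real" where
  "phiw q c i = (if c i = i then 1 - q (c (i - 1)) i else q (c i) i)"

lemma cp_paths_0: "cp_paths 0 = {\<lambda>_. 0}"
  by (auto simp: cp_paths_def)

lemma cp_pathsD:
  assumes "c \<in> cp_paths n"
  shows "c i \<le> i" "i \<notin> {1..n} \<Longrightarrow> c i = 0" "i \<in> {2..n} \<Longrightarrow> c i = c (i - 1) \<or> c i = i"
  using assms by (auto simp: cp_paths_def)

lemma cp_paths_Suc:
  "cp_paths (Suc m) = (\<lambda>c. c(Suc m := Suc m)) ` cp_paths m \<union> (\<lambda>c. c(Suc m := c m)) ` cp_paths m"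
proof (intro equalityI subsetI)
  fix c assume c: "c \<in> cp_paths (Suc m)"
  define c' where "c' = c(Suc m := 0)"
  have c': "c' \<in> cp_paths m"
    using c unfolding cp_paths_def c'_def
    by (auto simp: not_less_eq_eq)
  have "c (Suc m) = Suc m \<or> c (Suc m) = c m"
  proof (cases m)
    case 0
    then show ?thesis using cp_pathsD(1)[OF c, of 1] cp_pathsD(2)[OF c, of 0] by auto
  next
    case (Suc k)
    then show ?thesis using cp_pathsD(3)[OF c, of "Suc m"] by auto
  qed
  then show "c \<in> (\<lambda>c. c(Suc m := Suc m)) ` cp_paths m \<union> (\<lambda>c. c(Suc m := c m)) ` cp_paths m"
  proof
    assume h: "c (Suc m) = Suc m"
    have "c = c'(Suc m := Suc m)" using h by (auto simp: c'_def fun_eq_iff)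
    then have "c \<in> (\<lambda>c. c(Suc m := Suc m)) ` cp_paths m" using c' by (rule image_eqI)
    then show ?thesis by (rule UnI1)
  next
    assume h: "c (Suc m) = c m"
    have "c = c'(Suc m := c' m)" using h by (auto simp: c'_def fun_eq_iff)
    then have "c \<in> (\<lambda>c. c(Suc m := c m)) ` cp_paths m" using c' by (rule image_eqI)
    then show ?thesis by (rule UnI2)
  qed
next
  fix c assume "c \<in> (\<lambda>c. c(Suc m := Suc m)) ` cp_paths m \<union> (\<lambda>c. c(Suc m := c m)) ` cp_paths m"
  then show "c \<in> cp_paths (Suc m)"
  proof
    assume "c \<in> (\<lambda>c. c(Suc m := Suc m)) ` cp_paths m"
    then obtain d where d: "d \<in> cp_paths m" "c = d(Suc m := Suc m)" by auto
    have a: "\<forall>i. c i \<le> i" using cp_pathsD(1)[OF d(1)] d(2) by auto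
    have b: "\<forall>i. i \<notin> {1..Suc m} \<longrightarrow> c i = 0" using cp_pathsD(2)[OF d(1)] d(2) by auto
    have e: "\<forall>i\<in>{2..Suc m}. c i = c (i - 1) \<or> c i = i"
    proof
      fix i assume i: "i \<in> {2..Suc m}"
      show "c i = c (i - 1) \<or> c i = i"
      proof (cases "i = Suc m")
        case True then show ?thesis using d(2) by simp
      next
        case False
        then have "i \<in> {2..m}" "i - 1 \<noteq> Suc m" using i by auto
        then show ?thesis using cp_pathsD(3)[OF d(1)] d(2) False by auto
      qed
    qed
    show ?thesis using a b e unfolding cp_paths_def by blast
  next
    assume "c \<in> (\<lambda>c. c(Suc m := c m)) ` cp_paths m"
    then obtain d where d: "d \<in> cp_paths m" "c = d(Suc m := d m)" by auto
    have dm: "d m \<le> m" using cp_pathsD(1)[OF d(1), of m] by simp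
    have a: "\<forall>i. c i \<le> i"
    proof
      fix i show "c i \<le> i" using cp_pathsD(1)[OF d(1), of i] d(2) dm by (cases "i = Suc m") auto
    qed
    have b: "\<forall>i. i \<notin> {1..Suc m} \<longrightarrow> c i = 0" using cp_pathsD(2)[OF d(1)] d(2) by auto
    have e: "\<forall>i\<in>{2..Suc m}. c i = c (i - 1) \<or> c i = i"
    proof
      fix i assume i: "i \<in> {2..Suc m}"
      show "c i = c (i - 1) \<or> c i = i"
      proof (cases "i = Suc m")
        case True then show ?thesis using d(2) by simp
      next
        case False
        then have "i \<in> {2..m}" "i - 1 \<noteq> Suc m" using i by auto
        then show ?thesis using cp_pathsD(3)[OF d(1)] d(2) False by auto
      qed
    qed
    show ?thesis using a b e unfolding cp_paths_def by blast
  qed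
qed

lemma finite_cp_paths: "finite (cp_paths n)"
proof (induction n)
  case 0 then show ?case by (simp add: cp_paths_0)
next
  case (Suc n) then show ?case unfolding cp_paths_Suc by (intro finite_UnI finite_imageI)
qed

lemma cp_paths_nonempty: "(\<lambda>_. 0) \<in> cp_paths n"
  by (auto simp: cp_paths_def)

lemma sum_cp_paths_Suc:
  fixes G :: "(nat \<Rightarrow> nat) \<Rightarrow> 'a::comm_monoid_add"
  shows "(\<Sum>c\<in>cp_paths (Suc m). G c) =
     (\<Sum>c\<in>cp_paths m. G (c(Suc m := Suc m)) + G (c(Suc m := c m)))"
proof -
  have inj1: "inj_on (\<lambda>c. c(Suc m := Suc m)) (cp_paths m)"
  proof (rule inj_onI)
    fix c d assume c: "c \<in> cp_paths m" and d: "d \<in> cp_paths m" and eq: "c(Suc m := Suc m) = d(Suc m := Suc m)"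
    show "c = d"
    proof (rule ext)
      fix x show "c x = d x"
      proof (cases "x = Suc m")
        case True then show ?thesis using cp_pathsD(2)[OF c, of x] cp_pathsD(2)[OF d, of x] by simp
      next
        case False then show ?thesis using fun_cong[OF eq, of x] by simp
      qed
    qed
  qed
  have inj2: "inj_on (\<lambda>c. c(Suc m := c m)) (cp_paths m)"
  proof (rule inj_onI)
    fix c d assume c: "c \<in> cp_paths m" and d: "d \<in> cp_paths m" and eq: "c(Suc m := c m) = d(Suc m := d m)"
    show "c = d"
    proof (rule ext)
      fix x show "c x = d x"
      proof (cases "x = Suc m")
        case True then show ?thesis using cp_pathsD(2)[OF c, of x] cp_pathsD(2)[OF d, of x] by simp
      next
        case False then show ?thesis using fun_cong[OF eq, of x] by simp
      qed
    qed
  qed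
  have disj: "(\<lambda>c. c(Suc m := Suc m)) ` cp_paths m \<inter> (\<lambda>c. c(Suc m := c m)) ` cp_paths m = {}"
  proof (safe)
    fix c d assume "c \<in> cp_paths m" "d \<in> cp_paths m" and eq: "c(Suc m := Suc m) = d(Suc m := d m)"
    have "Suc m = d m" using fun_cong[OF eq, of "Suc m"] by simp
    with cp_pathsD(1)[OF \<open>d \<in> cp_paths m\<close>, of m] show "c(Suc m := Suc m) \<in> {}" by simp
  qed
  have "(\<Sum>c\<in>cp_paths (Suc m). G c) = sum G ((\<lambda>c. c(Suc m := Suc m)) ` cp_paths m) + sum G ((\<lambda>c. c(Suc m := c m)) ` cp_paths m)"
    unfolding cp_paths_Suc by (rule sum.union_disjoint) (simp_all add: finite_cp_paths disj)
  also have "\<dots> = (\<Sum>c\<in>cp_paths m. G (c(Suc m := Suc m))) + (\<Sum>c\<in>cp_paths m. G (c(Suc m := c m)))"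
    by (simp add: sum.reindex inj1 inj2)
  finally show ?thesis by (simp add: sum.distrib)
qed

lemma cp_weight_alt:
  assumes "c \<in> cp_paths n"
  shows "cp_weight q n c = (\<Prod>i\<in>{1..n}. phiw q c i)"
  unfolding cp_weight_def
proof (rule prod.cong[OF refl])
  fix i assume i: "i \<in> {1..n}"
  have c0: "c 0 = 0" using cp_pathsD(2)[OF assms, of 0] by simp
  have c1: "c 1 \<le> 1" using cp_pathsD(1)[OF assms, of 1] by simp
  show "(if i = 1 then if c 1 = 0 then q 0 1 else 1 - q 0 1
         else if c i = i then 1 - q (c (i - 1)) i else q (c i) i) = phiw q c i"
    using c0 c1 by (cases "c 1 = 0") (auto simp: phiw_def)
qed

lemma cp_weight_Suc:
  assumes c: "c \<in> cp_paths m" and x: "x = Suc m \<or> x = c m"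
  shows "cp_weight q (Suc m) (c(Suc m := x)) = cp_weight q m c * phiw q (c(Suc m := x)) (Suc m)"
proof -
  have "c(Suc m := x) \<in> cp_paths (Suc m)" using x c unfolding cp_paths_Suc by auto
  then have "cp_weight q (Suc m) (c(Suc m := x)) = (\<Prod>i\<in>{1..Suc m}. phiw q (c(Suc m := x)) i)"
    by (rule cp_weight_alt)
  also have "\<dots> = (\<Prod>i\<in>{1..m}. phiw q (c(Suc m := x)) i) * phiw q (c(Suc m := x)) (Suc m)"
    by (simp add: atLeastAtMostSuc_conv)
  also have "(\<Prod>i\<in>{1..m}. phiw q (c(Suc m := x)) i) = (\<Prod>i\<in>{1..m}. phiw q c i)"
    by (rule prod.cong) (auto simp: phiw_def)
  also have "\<dots> = cp_weight q m c" using cp_weight_alt[OF c] by simp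
  finally show ?thesis .
qed

lemma phiw_reset: "phiw q (c(Suc m := Suc m)) (Suc m) = 1 - q (c m) (Suc m)"
  by (simp add: phiw_def)

lemma phiw_stay: "c \<in> cp_paths m \<Longrightarrow> phiw q (c(Suc m := c m)) (Suc m) = q (c m) (Suc m)"
  using cp_pathsD(1)[of c m m] by (auto simp: phiw_def)

definition qok :: "nat \<Rightarrow> (nat \<Rightarrow> nat \<Rightarrow> real) \<Rightarrow> bool" where
  "qok n q \<longleftrightarrow> (\<forall>j k. j < k \<longrightarrow> k \<le> n \<longrightarrow> 0 \<le> q j k \<and> q j k \<le> 1)"

lemma phiw_nonneg:
  assumes "qok n q" "c \<in> cp_paths n" "i \<in> {1..n}"
  shows "0 \<le> phiw q c i"
proof -
  have "c i \<le> i" "c (i - 1) \<le> i - 1" using cp_pathsD(1)[OF assms(2)] by auto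
  then show ?thesis using assms(1,3) unfolding qok_def phiw_def
    by (cases "c i = i") (auto, (metis diff_less le_less_trans less_one linorder_not_le)?)
qed

lemma cp_weight_nonneg:
  assumes "qok n q" "c \<in> cp_paths n"
  shows "0 \<le> cp_weight q n c"
  using phiw_nonneg[OF assms] cp_weight_alt[OF assms(2)] by (auto intro!: prod_nonneg)

lemma qok_mono: "qok n q \<Longrightarrow> m \<le> n \<Longrightarrow> qok m q"
  by (auto simp: qok_def)

lemma ennreal_split:
  fixes F :: ennreal
  assumes "0 \<le> x" "x \<le> 1"
  shows "ennreal w * (ennreal (1 - x) * F) + ennreal w * (ennreal x * F) = ennreal w * F"
proof -
  have e: "ennreal (1 - x) + ennreal x = 1"
    using assms by (subst ennreal_plus[symmetric]) auto
  have "ennreal w * (ennreal (1 - x) * F) + ennreal w * (ennreal x * F) = ennreal w * ((ennreal (1 - x) + ennreal x) * F)"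
    by (simp only: distrib_left distrib_right mult.assoc)
  then show ?thesis using e by simp
qed

lemma marg:
  fixes F :: "(nat \<Rightarrow> nat) \<Rightarrow> ennreal"
  assumes q: "qok n q" and mn: "m \<le> n"
    and F: "\<And>c c'. (\<And>k. k \<le> m \<Longrightarrow> c k = c' k) \<Longrightarrow> F c = F c'"
  shows "(\<Sum>c\<in>cp_paths n. ennreal (cp_weight q n c) * F c) = (\<Sum>c\<in>cp_paths m. ennreal (cp_weight q m c) * F c)"
  using mn q
proof (induction n)
  case 0
  then show ?case by simp
next
  case (Suc n)
  show ?case
  proof (cases "m = Suc n")
    case True then show ?thesis by simp
  next
    case False
    then have mn: "m \<le> n" using Suc.prems by simp
    have qn: "qok n q" using Suc.prems qok_mono by auto
    have "(\<Sum>c\<in>cp_paths (Suc n). ennreal (cp_weight q (Suc n) c) * F c)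
      = (\<Sum>c\<in>cp_paths n. ennreal (cp_weight q n c) * F c)"
      unfolding sum_cp_paths_Suc
    proof (rule sum.cong[OF refl])
      fix c assume c: "c \<in> cp_paths n"
      have F1: "F (c(Suc n := Suc n)) = F c" "F (c(Suc n := c n)) = F c"
        by (rule F; use mn in auto)+
      have cn: "c n < Suc n" using cp_pathsD(1)[OF c, of n] by simp
      have q1: "0 \<le> q (c n) (Suc n)" "q (c n) (Suc n) \<le> 1" using Suc.prems(2) cn unfolding qok_def by auto
      have w: "0 \<le> cp_weight q n c" using cp_weight_nonneg[OF qn c] .
      show "ennreal (cp_weight q (Suc n) (c(Suc n := Suc n))) * F (c(Suc n := Suc n)) +
            ennreal (cp_weight q (Suc n) (c(Suc n := c n))) * F (c(Suc n := c n)) =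
            ennreal (cp_weight q n c) * F c"
        unfolding F1 cp_weight_Suc[OF c, of "Suc n", simplified] cp_weight_Suc[OF c, of "c n", simplified]
          phiw_reset phiw_stay[OF c]
        using ennreal_split[OF q1, of "cp_weight q n c" "F c"] q1 w
        by (simp add: ennreal_mult mult.assoc)
    qed
    then show ?thesis using Suc.IH[OF mn qn] by simp
  qed
qed




locale cpm =
  fixes n :: nat and q :: "nat \<Rightarrow> nat \<Rightarrow> real" and J :: "'x measure" and \<psi> :: "'y measure"
    and p :: "'x \<Rightarrow> 'y \<Rightarrow> real" and y :: "nat \<Rightarrow> 'y"
  assumes n_pos: "n \<ge> 1" and J: "prob_space J" and qok: "qok n q"
    and p_meas: "(\<lambda>(x, v). p x v) \<in> borel_measurable (J \<Otimes>\<^sub>M \<psi>)"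
    and p_nonneg: "\<And>x v. x \<in> space J \<Longrightarrow> v \<in> space \<psi> \<Longrightarrow> 0 \<le> p x v"
    and y: "\<And>l. l \<in> {1..n} \<Longrightarrow> y l \<in> space \<psi>"
    and pos: "\<And>j k. 0 < j \<Longrightarrow> j \<le> k \<Longrightarrow> k \<le> n \<Longrightarrow>
                (\<integral>x. (\<Prod>l\<in>{j..k}. p x (y l)) \<partial>J) > 0"
begin

abbreviation "P \<equiv> cp_paths n"
abbreviation "PM \<equiv> PiM {1..n} (\<lambda>_. J)"
abbreviation "W c \<equiv> ennreal (cp_weight q n c)"

lemma pm: "l \<in> {1..n} \<Longrightarrow> (\<lambda>x. p x (y l)) \<in> borel_measurable J"
proof -
  assume l: "l \<in> {1..n}"
  have "(\<lambda>x. (x, y l)) \<in> measurable J (J \<Otimes>\<^sub>M \<psi>)"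
    using y[OF l] by (intro measurable_Pair) auto
  from measurable_compose[OF this p_meas] show ?thesis by simp
qed

lemma pnn: "l \<in> {1..n} \<Longrightarrow> x \<in> space J \<Longrightarrow> 0 \<le> p x (y l)"
  using p_nonneg y by auto

definition fib :: "nat \<Rightarrow> (nat \<Rightarrow> nat) \<Rightarrow> nat \<Rightarrow> nat set" where
  "fib m c a = {l \<in> {1..m}. max (c l) 1 = a}"

definition seg :: "nat \<Rightarrow> (nat \<Rightarrow> nat) \<Rightarrow> nat \<Rightarrow> ('x \<Rightarrow> ennreal) \<Rightarrow> nat \<Rightarrow> ennreal" where
  "seg m c a g k = (\<integral>\<^sup>+x. (if a = max (c k) 1 then g x else 1) * ennreal (\<Prod>l\<in>fib m c a. p x (y l)) \<partial>J)"

definition Lam :: "nat \<Rightarrow> (nat \<Rightarrow> nat) \<Rightarrow> ('x \<Rightarrow> ennreal) \<Rightarrow> nat \<Rightarrow> ennreal" where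
  "Lam m c g k = (\<Prod>a\<in>{1..n}. seg m c a g k)"

definition Phi :: "nat \<Rightarrow> ((nat \<Rightarrow> nat) \<Rightarrow> bool) \<Rightarrow> ('x \<Rightarrow> ennreal) \<Rightarrow> nat \<Rightarrow> ennreal" where
  "Phi m Q g k = (\<Sum>c\<in>P. W c * (if Q c then Lam m c g k else 0))"

lemma fib_sub: "m \<le> n \<Longrightarrow> fib m c a \<subseteq> {1..n}"
  by (auto simp: fib_def)

lemma pprod_meas: "m \<le> n \<Longrightarrow> (\<lambda>x. \<Prod>l\<in>fib m c a. p x (y l)) \<in> borel_measurable J"
  by (rule borel_measurable_prod) (use pm fib_sub in blast)

lemma int_fact:
  assumes c: "c \<in> P" and m: "m \<le> n" and k: "k \<in> {1..n}" and g: "g \<in> borel_measurable J"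
  shows "(\<integral>\<^sup>+z. g (z (max (c k) 1)) * ennreal (\<Prod>l\<in>{1..m}. p (z (max (c l) 1)) (y l)) \<partial>PM) = Lam m c g k"
proof -
  interpret PS: product_sigma_finite "\<lambda>_. J"
    unfolding product_sigma_finite_def using prob_space_imp_sigma_finite[OF J] by simp
  have sk: "max (c k) 1 \<in> {1..n}" using cp_pathsD(1)[OF c, of k] k by auto
  have sl: "max (c l) 1 \<in> {1..n}" if "l \<in> {1..m}" for l using cp_pathsD(1)[OF c, of l] that m by auto
  have eq: "g (z (max (c k) 1)) * ennreal (\<Prod>l\<in>{1..m}. p (z (max (c l) 1)) (y l)) =
     (\<Prod>a\<in>{1..n}. (if a = max (c k) 1 then g (z a) else 1) * ennreal (\<Prod>l\<in>fib m c a. p (z a) (y l)))"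
    if z: "z \<in> space PM" for z
  proof -
    have za: "a \<in> {1..n} \<Longrightarrow> z a \<in> space J" for a using z by (auto simp: space_PiM)
    have "(\<Prod>l\<in>{1..m}. p (z (max (c l) 1)) (y l)) =
          (\<Prod>a\<in>{1..n}. \<Prod>l\<in>{l \<in> {1..m}. max (c l) 1 = a}. p (z (max (c l) 1)) (y l))"
      by (rule prod.group[symmetric]) (use sl in auto)
    also have "\<dots> = (\<Prod>a\<in>{1..n}. \<Prod>l\<in>fib m c a. p (z a) (y l))"
      unfolding fib_def by (intro prod.cong refl) auto
    finally have pe: "(\<Prod>l\<in>{1..m}. p (z (max (c l) 1)) (y l)) = (\<Prod>a\<in>{1..n}. \<Prod>l\<in>fib m c a. p (z a) (y l))" .
    have nn: "\<And>a. a \<in> {1..n} \<Longrightarrow> 0 \<le> (\<Prod>l\<in>fib m c a. p (z a) (y l))"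
      using pnn za fib_sub[OF m] by (meson prod_nonneg subsetD)
    have "ennreal (\<Prod>l\<in>{1..m}. p (z (max (c l) 1)) (y l)) =
        (\<Prod>a\<in>{1..n}. ennreal (\<Prod>l\<in>fib m c a. p (z a) (y l)))"
      unfolding pe by (rule prod_ennreal[symmetric]) (rule nn)
    moreover have "g (z (max (c k) 1)) = (\<Prod>a\<in>{1..n}. (if a = max (c k) 1 then g (z a) else 1))"
      using sk by simp
    ultimately show ?thesis by (simp add: prod.distrib)
  qed
  have "(\<integral>\<^sup>+z. g (z (max (c k) 1)) * ennreal (\<Prod>l\<in>{1..m}. p (z (max (c l) 1)) (y l)) \<partial>PM) =
        (\<integral>\<^sup>+z. (\<Prod>a\<in>{1..n}. (if a = max (c k) 1 then g (z a) else 1) * ennreal (\<Prod>l\<in>fib m c a. p (z a) (y l))) \<partial>PM)"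
    by (rule nn_integral_cong) (rule eq)
  also have "\<dots> = (\<Prod>a\<in>{1..n}. seg m c a g k)"
    unfolding seg_def
    by (rule PS.product_nn_integral_prod) (use g pprod_meas[OF m] in auto)
  finally show ?thesis unfolding Lam_def .
qed

lemma comp_meas: "a \<in> {1..n} \<Longrightarrow> (\<lambda>z. z a) \<in> measurable PM J"
  by (rule measurable_component_singleton) simp

lemma lik_meas:
  assumes c: "c \<in> P" and m: "m \<le> n"
  shows "(\<lambda>z. \<Prod>l\<in>{1..m}. p (z (max (c l) 1)) (y l)) \<in> borel_measurable PM"
proof (rule borel_measurable_prod)
  fix l assume l: "l \<in> {1..m}"
  have a: "max (c l) 1 \<in> {1..n}" using cp_pathsD(1)[OF c, of l] l m by auto
  have l': "l \<in> {1..n}" using l m by auto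
  show "(\<lambda>z. p (z (max (c l) 1)) (y l)) \<in> borel_measurable PM"
    using measurable_compose[OF comp_meas[OF a] pm[OF l']] by simp
qed

lemma fst_meas: "fst \<in> measurable (cp_prior q n J) (count_space P)"
proof -
  have "fst \<in> measurable (cp_prior q n J) (point_measure P (\<lambda>c. W c))"
    unfolding cp_prior_def by (rule measurable_fst)
  moreover have "sets (point_measure P (\<lambda>c. W c)) = sets (count_space P)"
    by (simp add: sets_point_measure)
  ultimately show ?thesis
    using measurable_cong_sets[of "cp_prior q n J" "cp_prior q n J" "point_measure P (\<lambda>c. W c)" "count_space P"] by simp
qed

lemma snd_meas: "snd \<in> measurable (cp_prior q n J) PM"
  unfolding cp_prior_def by (rule measurable_snd)

lemma space_prior: "space (cp_prior q n J) = P \<times> space PM"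
  unfolding cp_prior_def by (simp add: space_pair_measure space_point_measure)

lemma F_meas:
  assumes m: "m \<le> n" and k: "k \<in> {1..n}" and g: "g \<in> borel_measurable J"
  shows "(\<lambda>\<omega>. (if Q (fst \<omega>) then g (cp_X k \<omega>) else 0) * ennreal (cp_lik p y m \<omega>)) \<in> borel_measurable (cp_prior q n J)"
proof -
  have "(\<lambda>\<omega>. (\<lambda>c \<omega>. (if Q c then g (snd \<omega> (max (c k) 1)) else 0) * ennreal (\<Prod>l\<in>{1..m}. p (snd \<omega> (max (c l) 1)) (y l))) (fst \<omega>) \<omega>)
        \<in> borel_measurable (cp_prior q n J)"
  proof (rule measurable_compose_countable'[OF _ fst_meas])
    fix c assume c: "c \<in> P"
    have a: "max (c k) 1 \<in> {1..n}" using cp_pathsD(1)[OF c, of k] k by auto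
    have "(\<lambda>z. (if Q c then g (z (max (c k) 1)) else 0) * ennreal (\<Prod>l\<in>{1..m}. p (z (max (c l) 1)) (y l))) \<in> borel_measurable PM"
      using measurable_compose[OF comp_meas[OF a] g] lik_meas[OF c m] by measurable
    from measurable_compose[OF snd_meas this]
    show "(\<lambda>\<omega>. (if Q c then g (snd \<omega> (max (c k) 1)) else 0) * ennreal (\<Prod>l\<in>{1..m}. p (snd \<omega> (max (c l) 1)) (y l))) \<in> borel_measurable (cp_prior q n J)"
      by simp
  qed (simp add: finite_cp_paths countable_finite)
  then show ?thesis by (simp only: cp_X_def cp_lik_def)
qed

lemma NN:
  assumes m: "m \<le> n" and k: "k \<in> {1..n}" and g: "g \<in> borel_measurable J"
  shows "(\<integral>\<^sup>+\<omega>. (if Q (fst \<omega>) then g (cp_X k \<omega>) else 0) * ennreal (cp_lik p y m \<omega>) \<partial>cp_prior q n J) = Phi m Q g k"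
proof -
  interpret PMs: prob_space PM by (rule prob_space_PiM) (simp add: J)
  let ?F = "\<lambda>\<omega>. (if Q (fst \<omega>) then g (cp_X k \<omega>) else 0) * ennreal (cp_lik p y m \<omega>)"
  have "integral\<^sup>N (cp_prior q n J) ?F = (\<integral>\<^sup>+c. \<integral>\<^sup>+z. ?F (c, z) \<partial>PM \<partial>point_measure P (\<lambda>c. W c))"
    unfolding cp_prior_def
    by (rule PMs.nn_integral_fst[symmetric]) (use F_meas[OF m k g] in \<open>simp add: cp_prior_def\<close>)
  also have "\<dots> = (\<Sum>c\<in>P. W c * (\<integral>\<^sup>+z. ?F (c, z) \<partial>PM))"
    by (rule nn_integral_point_measure_finite) (rule finite_cp_paths)
  also have "\<dots> = Phi m Q g k"
    unfolding Phi_def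
  proof (rule sum.cong[OF refl])
    fix c assume c: "c \<in> P"
    have "(\<integral>\<^sup>+z. ?F (c, z) \<partial>PM) = (if Q c then Lam m c g k else 0)"
    proof (cases "Q c")
      case True
      then show ?thesis using int_fact[OF c m k g] by (simp add: cp_X_def cp_lik_def)
    qed simp
    then show "W c * (\<integral>\<^sup>+z. ?F (c, z) \<partial>PM) = W c * (if Q c then Lam m c g k else 0)" by simp
  qed
  finally show ?thesis .
qed

lemma path_mono:
  assumes c: "c \<in> P" and l: "l \<le> n" and l': "l' \<le> l"
  shows "c l' \<le> c l"
  using l l'
proof (induction l)
  case 0 then show ?case by simp
next
  case (Suc l)
  show ?case
  proof (cases "l' = Suc l")
    case True then show ?thesis by simp
  next
    case False
    then have "c l' \<le> c l" using Suc by simp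
    moreover have "c l \<le> c (Suc l)"
    proof (cases l)
      case 0 then show ?thesis using cp_pathsD(2)[OF c, of 0] by simp
    next
      case (Suc l0)
      have "Suc l \<in> {2..n}" using Suc \<open>Suc l \<le> n\<close> by auto
      then have "c (Suc l) = c l \<or> c (Suc l) = Suc l" using cp_pathsD(3)[OF c, of "Suc l"] by simp
      then show ?thesis using cp_pathsD(1)[OF c, of l] by auto
    qed
    ultimately show ?thesis by simp
  qed
qed

lemma path_const:
  assumes c: "c \<in> P" and l: "l \<le> n" and "c l = a" "1 \<le> a" "a \<le> l'" "l' \<le> l"
  shows "c l' = a"
  using assms(2-)
proof (induction l)
  case 0 then show ?case by simp
next
  case (Suc l)
  show ?case
  proof (cases "l' = Suc l")
    case True then show ?thesis using Suc by simp
  next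
    case False
    then have l'l: "l' \<le> l" using Suc by simp
    have "Suc l \<in> {2..n}" using Suc l'l by auto
    then have "c (Suc l) = c l \<or> c (Suc l) = Suc l" using cp_pathsD(3)[OF c, of "Suc l"] by simp
    moreover have "c (Suc l) \<noteq> Suc l" using Suc l'l by auto
    ultimately have "c l = a" using Suc by simp
    then show ?thesis using Suc l'l by simp
  qed
qed

lemma fib_interval:
  assumes c: "c \<in> P" and m: "m \<le> n" and ne: "fib m c a \<noteq> {}"
  shows "fib m c a = {a..Max (fib m c a)}" "1 \<le> a" "Max (fib m c a) \<le> m"
proof -
  have fin: "finite (fib m c a)" by (simp add: fib_def)
  define e where "e = Max (fib m c a)"
  have e: "e \<in> fib m c a" using Max_in[OF fin ne] e_def by simp
  then have e1: "e \<in> {1..m}" "max (c e) 1 = a" by (auto simp: fib_def)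
  show a1: "1 \<le> a" using e1 by auto
  show "Max (fib m c a) \<le> m" using e1 e_def by simp
  have lo: "a \<le> l" if "l \<in> fib m c a" for l
    using that cp_pathsD(1)[OF c, of l] by (auto simp: fib_def)
  have hi: "l \<le> e" if "l \<in> fib m c a" for l
    using Max_ge[OF fin that] e_def by simp
  have mid: "l \<in> fib m c a" if "a \<le> l" "l \<le> e" for l
  proof -
    have l1: "l \<in> {1..m}" using that a1 e1 by auto
    show ?thesis
    proof (cases "a = 1")
      case True
      then have "c e \<le> 1" using e1 by simp
      moreover have "c l \<le> c e" using path_mono[OF c _ that(2)] e1 m by simp
      ultimately show ?thesis using l1 True by (simp add: fib_def)
    next
      case False
      then have "c e = a" using e1 by auto
      then have "c l = a" using path_const[OF c _ _ a1 that] e1 m by simp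
      then show ?thesis using l1 a1 by (simp add: fib_def)
    qed
  qed
  show "fib m c a = {a..Max (fib m c a)}"
    unfolding e_def[symmetric]
  proof (intro equalityI subsetI)
    fix l assume "l \<in> fib m c a" then show "l \<in> {a..e}" using lo hi by simp
  next
    fix l assume "l \<in> {a..e}" then show "l \<in> fib m c a" using mid by simp
  qed
qed

definition seg1 :: "nat \<Rightarrow> (nat \<Rightarrow> nat) \<Rightarrow> nat \<Rightarrow> ennreal" where
  "seg1 m c a = (\<integral>\<^sup>+x. ennreal (\<Prod>l\<in>fib m c a. p x (y l)) \<partial>J)"

lemma seg1_pos_fin:
  assumes c: "c \<in> P" and m: "m \<le> n"
  shows "seg1 m c a \<noteq> 0" "seg1 m c a < \<top>"
proof -
  have "seg1 m c a \<noteq> 0 \<and> seg1 m c a < \<top>"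
  proof (cases "fib m c a = {}")
    case True
    then have "seg1 m c a = emeasure J (space J)" by (simp add: seg1_def)
    then show ?thesis using prob_space.emeasure_space_1[OF J] by simp
  next
    case False
    note fi = fib_interval[OF c m False]
    define e where "e = Max (fib m c a)"
    have ae: "a \<le> e" using fi(1) False e_def by auto
    have I: "(\<integral>x. (\<Prod>l\<in>{a..e}. p x (y l)) \<partial>J) > 0"
      using pos[of a e] fi ae m e_def by auto
    then have int: "integrable J (\<lambda>x. \<Prod>l\<in>{a..e}. p x (y l))"
      using not_integrable_integral_eq by fastforce
    have "seg1 m c a = (\<integral>\<^sup>+x. ennreal (\<Prod>l\<in>{a..e}. p x (y l)) \<partial>J)"
      unfolding seg1_def using fi(1) e_def by simp
    also have "\<dots> = ennreal (\<integral>x. (\<Prod>l\<in>{a..e}. p x (y l)) \<partial>J)"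
    proof (rule nn_integral_eq_integral[OF int])
      show "AE x in J. 0 \<le> (\<Prod>l\<in>{a..e}. p x (y l))"
      proof (rule AE_I2, rule prod_nonneg)
        fix x l assume "x \<in> space J" "l \<in> {a..e}"
        then show "0 \<le> p x (y l)" using fi(2,3) m e_def by (intro pnn) auto
      qed
    qed
    finally show ?thesis using I by simp
  qed
  then show "seg1 m c a \<noteq> 0" "seg1 m c a < \<top>" by auto
qed

lemma Lam_1: "Lam m c (\<lambda>_. 1) k = (\<Prod>a\<in>{1..n}. seg1 m c a)"
  unfolding Lam_def seg_def seg1_def by simp

lemma Lam1_pos_fin:
  assumes c: "c \<in> P" and m: "m \<le> n"
  shows "Lam m c (\<lambda>_. 1) k \<noteq> 0" "Lam m c (\<lambda>_. 1) k < \<top>"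
proof -
  show "Lam m c (\<lambda>_. 1) k \<noteq> 0" unfolding Lam_1 using seg1_pos_fin(1)[OF c m] by simp
  have "\<And>a. seg1 m c a \<noteq> \<top>" using seg1_pos_fin(2)[OF c m] by (simp add: top.not_eq_extremum)
  then have "(\<Prod>a\<in>{1..n}. seg1 m c a) \<noteq> \<top>" unfolding ennreal_prod_eq_top by auto
  then show "Lam m c (\<lambda>_. 1) k < \<top>" unfolding Lam_1 by (simp add: top.not_eq_extremum)
qed

lemma Lam_le:
  assumes g: "\<And>x. x \<in> space J \<Longrightarrow> g x \<le> 1"
  shows "Lam m c g k \<le> Lam m c (\<lambda>_. 1) k"
  unfolding Lam_def
proof (rule prod_mono_ennreal)
  fix a show "seg m c a g k \<le> seg m c a (\<lambda>_. 1) k"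
    unfolding seg_def
  proof (rule nn_integral_mono)
    fix x assume x: "x \<in> space J"
    have "g x * ennreal (\<Prod>l\<in>fib m c a. p x (y l)) \<le> 1 * ennreal (\<Prod>l\<in>fib m c a. p x (y l))"
      by (rule mult_right_mono) (simp_all add: g x)
    then show "(if a = max (c k) 1 then g x else 1) * ennreal (\<Prod>l\<in>fib m c a. p x (y l))
        \<le> (if a = max (c k) 1 then 1 else 1) * ennreal (\<Prod>l\<in>fib m c a. p x (y l))"
      by (cases "a = max (c k) 1") auto
  qed
qed

lemma Phi_mono:
  assumes "\<And>c. c \<in> P \<Longrightarrow> Q c \<Longrightarrow> Q' c" "\<And>c. c \<in> P \<Longrightarrow> Lam m c g k \<le> Lam m c g' k'"
  shows "Phi m Q g k \<le> Phi m Q' g' k'"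
  unfolding Phi_def
  by (rule sum_mono) (use assms in \<open>auto intro!: mult_left_mono\<close>)

lemma Phi_fin:
  assumes m: "m \<le> n" and g: "\<And>x. x \<in> space J \<Longrightarrow> g x \<le> 1"
  shows "Phi m Q g k < \<top>"
  unfolding Phi_def ennreal_sum_less_top[OF finite_cp_paths]
proof
  fix c assume c: "c \<in> P"
  have "Lam m c g k \<le> Lam m c (\<lambda>_. 1) k" by (rule Lam_le) (rule g)
  then have "Lam m c g k < \<top>" using Lam1_pos_fin(2)[OF c m, of k] by (rule le_less_trans)
  then show "W c * (if Q c then Lam m c g k else 0) < \<top>"
    by (simp add: ennreal_mult_less_top)
qed

lemma Lam_cong:
  assumes "\<And>l. l \<le> m \<Longrightarrow> c l = c' l" "k \<le> m"
  shows "Lam m c g k = Lam m c' g k"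
proof -
  have "fib m c a = fib m c' a" for a using assms(1) by (auto simp: fib_def)
  moreover have "c k = c' k" using assms by simp
  ultimately show ?thesis unfolding Lam_def seg_def by simp
qed

lemma Phi_marg:
  assumes mm: "m \<le> m'" "m' \<le> n" "k \<le> m" and Q: "\<And>c c'. (\<And>l. l \<le> m' \<Longrightarrow> c l = c' l) \<Longrightarrow> Q c = Q c'"
  shows "Phi m Q g k = (\<Sum>c\<in>cp_paths m'. ennreal (cp_weight q m' c) * (if Q c then Lam m c g k else 0))"
  unfolding Phi_def
proof (rule marg[OF qok mm(2)])
  fix c c' :: "nat \<Rightarrow> nat" assume h: "\<And>l. l \<le> m' \<Longrightarrow> c l = c' l"
  have "Lam m c g k = Lam m c' g k" by (rule Lam_cong) (use h mm in auto)
  then show "(if Q c then Lam m c g k else 0) = (if Q c' then Lam m c' g k else 0)"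
    using Q[OF h] by simp
qed

lemma S1:
  assumes b: "b < n"
  shows "Phi b (\<lambda>c. c b = a \<and> c (Suc b) = Suc b) g b = ennreal (1 - q a (Suc b)) * Phi b (\<lambda>c. c b = a) g b"
proof -
  have "Phi b (\<lambda>c. c b = a \<and> c (Suc b) = Suc b) g b =
    (\<Sum>c\<in>cp_paths (Suc b). ennreal (cp_weight q (Suc b) c) * (if c b = a \<and> c (Suc b) = Suc b then Lam b c g b else 0))"
    by (rule Phi_marg) (use b in auto)
  also have "\<dots> = (\<Sum>c\<in>cp_paths b. ennreal (cp_weight q (Suc b) (c(Suc b := Suc b))) * (if c b = a then Lam b c g b else 0))"
    unfolding sum_cp_paths_Suc
  proof (rule sum.cong[OF refl])
    fix c assume c: "c \<in> cp_paths b"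
    have "c b \<noteq> Suc b" using cp_pathsD(1)[OF c, of b] by simp
    moreover have "Lam b (c(Suc b := Suc b)) g b = Lam b c g b" by (rule Lam_cong) auto
    ultimately show "ennreal (cp_weight q (Suc b) (c(Suc b := Suc b))) *
          (if (c(Suc b := Suc b)) b = a \<and> (c(Suc b := Suc b)) (Suc b) = Suc b then Lam b (c(Suc b := Suc b)) g b else 0) +
          ennreal (cp_weight q (Suc b) (c(Suc b := c b))) *
          (if (c(Suc b := c b)) b = a \<and> (c(Suc b := c b)) (Suc b) = Suc b then Lam b (c(Suc b := c b)) g b else 0) =
          ennreal (cp_weight q (Suc b) (c(Suc b := Suc b))) * (if c b = a then Lam b c g b else 0)"
      by simp
  qed
  also have "\<dots> = (\<Sum>c\<in>cp_paths b. ennreal (1 - q a (Suc b)) * (ennreal (cp_weight q b c) * (if c b = a then Lam b c g b else 0)))"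
  proof (rule sum.cong[OF refl])
    fix c assume c: "c \<in> cp_paths b"
    have w: "cp_weight q (Suc b) (c(Suc b := Suc b)) = cp_weight q b c * (1 - q (c b) (Suc b))"
      using cp_weight_Suc[OF c, of "Suc b" q] phiw_reset[of q c b] by simp
    have nn1: "0 \<le> cp_weight q b c" using cp_weight_nonneg[OF qok_mono[OF qok] c] b by simp
    have nn2: "0 \<le> 1 - q (c b) (Suc b)" using qok cp_pathsD(1)[OF c, of b] b unfolding qok_def by auto
    show "ennreal (cp_weight q (Suc b) (c(Suc b := Suc b))) * (if c b = a then Lam b c g b else 0) =
        ennreal (1 - q a (Suc b)) * (ennreal (cp_weight q b c) * (if c b = a then Lam b c g b else 0))"
      unfolding w using nn1 nn2 by (cases "c b = a") (simp_all add: ennreal_mult mult_ac)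
  qed
  also have "\<dots> = ennreal (1 - q a (Suc b)) * Phi b (\<lambda>c. c b = a) g b"
    using b by (subst Phi_marg[of b b]) (auto simp: sum_distrib_left)
  finally show ?thesis .
qed

context
  fixes b :: nat
  assumes b1: "1 \<le> b" and bn: "b < n"
begin

definition "Dset = {c \<in> P. c (Suc b) = Suc b}"
definition "tl_of c = (\<lambda>k. if k \<le> b then 0 else c k)"
definition "hd_of c = (\<lambda>k. if k \<le> b then c k else 0)"
definition "jn h t = (\<lambda>k. if k \<le> b then h k else t k)"
definition "Tset = tl_of ` Dset"
definition "Psi c = (\<Prod>a\<in>{Suc b..n}. seg1 n c a)"
definition "WT t = ennreal (\<Prod>i\<in>{Suc (Suc b)..n}. phiw q t i)"

lemma hd_of_path: "c \<in> P \<Longrightarrow> hd_of c \<in> cp_paths b"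
  unfolding hd_of_def cp_paths_def using bn by (auto dest: cp_pathsD)

lemma jn_path:
  assumes h: "h \<in> cp_paths b" and t: "t \<in> Tset"
  shows "jn h t \<in> Dset"
proof -
  obtain c where c: "c \<in> Dset" "t = tl_of c" using t unfolding Tset_def by auto
  have cP: "c \<in> P" and cb: "c (Suc b) = Suc b" using c by (auto simp: Dset_def)
  let ?j = "jn h t"
  have jk: "?j k = (if k \<le> b then h k else c k)" for k by (simp add: jn_def c tl_of_def)
  have a: "\<forall>k. ?j k \<le> k" using cp_pathsD(1)[OF h] cp_pathsD(1)[OF cP] by (simp add: jk)
  have z: "\<forall>k. k \<notin> {1..n} \<longrightarrow> ?j k = 0"
  proof (intro allI impI)
    fix k assume "k \<notin> {1..n}"
    then show "?j k = 0" using cp_pathsD(2)[OF h, of k] cp_pathsD(2)[OF cP, of k] bn by (auto simp: jk)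
  qed
  have e: "\<forall>k\<in>{2..n}. ?j k = ?j (k - 1) \<or> ?j k = k"
  proof
    fix k assume k: "k \<in> {2..n}"
    show "?j k = ?j (k - 1) \<or> ?j k = k"
    proof (cases "k \<le> b")
      case True
      moreover have "k - 1 \<le> b" using True by simp
      ultimately show ?thesis using cp_pathsD(3)[OF h, of k] k by (simp add: jk)
    next
      case False
      show ?thesis
      proof (cases "k = Suc b")
        case True then show ?thesis using cb by (simp add: jk)
      next
        case False2: False
        then have "\<not> k - 1 \<le> b" using False by auto
        then show ?thesis using cp_pathsD(3)[OF cP, of k] k False by (simp add: jk)
      qed
    qed
  qed
  have "?j \<in> P" using a z e unfolding cp_paths_def by blast
  moreover have "?j (Suc b) = Suc b" using cb by (simp add: jk)
  ultimately show ?thesis by (simp add: Dset_def)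
qed

lemma Tset_zero: "t \<in> Tset \<Longrightarrow> k \<le> b \<Longrightarrow> t k = 0"
  unfolding Tset_def tl_of_def by auto

lemma bij_join: "bij_betw (\<lambda>(h, t). jn h t) (cp_paths b \<times> Tset) Dset"
proof (rule bij_betwI')
  fix x y assume x: "x \<in> cp_paths b \<times> Tset" and y: "y \<in> cp_paths b \<times> Tset"
  obtain h t h' t' where xy: "x = (h, t)" "y = (h', t')" by (cases x, cases y) auto
  have hh: "h \<in> cp_paths b" "h' \<in> cp_paths b" "t \<in> Tset" "t' \<in> Tset" using x y xy by auto
  show "((\<lambda>(h, t). jn h t) x = (\<lambda>(h, t). jn h t) y) = (x = y)"
  proof
    assume eq: "(\<lambda>(h, t). jn h t) x = (\<lambda>(h, t). jn h t) y"
    have "h = h'"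
    proof
      fix k show "h k = h' k"
      proof (cases "k \<le> b")
        case True then show ?thesis using fun_cong[OF eq, of k] xy by (simp add: jn_def)
      next
        case False then show ?thesis using cp_pathsD(2)[OF hh(1), of k] cp_pathsD(2)[OF hh(2), of k] by simp
      qed
    qed
    moreover have "t = t'"
    proof
      fix k show "t k = t' k"
      proof (cases "k \<le> b")
        case False then show ?thesis using fun_cong[OF eq, of k] xy by (simp add: jn_def)
      next
        case True then show ?thesis using Tset_zero[OF hh(3)] Tset_zero[OF hh(4)] by simp
      qed
    qed
    ultimately show "x = y" using xy by simp
  qed simp
next
  fix x assume "x \<in> cp_paths b \<times> Tset" then show "(\<lambda>(h, t). jn h t) x \<in> Dset"
    using jn_path by auto
next
  fix c assume c: "c \<in> Dset"
  have "c = jn (hd_of c) (tl_of c)" by (auto simp: jn_def hd_of_def tl_of_def)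
  moreover have "(hd_of c, tl_of c) \<in> cp_paths b \<times> Tset"
    using c hd_of_path by (auto simp: Dset_def Tset_def)
  ultimately show "\<exists>x\<in>cp_paths b \<times> Tset. c = (\<lambda>(h, t). jn h t) x" by force
qed


lemma split_1n: "{1..n} = {1..b} \<union> {Suc b..n}" "{1..b} \<inter> {Suc b..n} = {}"
  using bn by auto

lemma prod_split_1n: "prod f {1..n} = prod f {1..b} * prod f {Suc b..n}"
  unfolding split_1n(1) by (rule prod.union_disjoint) (auto)

lemma Dset_P: "c \<in> Dset \<Longrightarrow> c \<in> P" by (simp add: Dset_def)

lemma W_jn:
  assumes h: "h \<in> cp_paths b" and t: "t \<in> Tset"
  shows "W (jn h t) = ennreal (cp_weight q b h) * ennreal (1 - q (h b) (Suc b)) * WT t"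
proof -
  let ?c = "jn h t"
  have cD: "?c \<in> Dset" by (rule jn_path[OF h t])
  have cP: "?c \<in> P" and cb: "?c (Suc b) = Suc b" using cD by (auto simp: Dset_def)
  have "cp_weight q n ?c = (\<Prod>i\<in>{1..b}. phiw q ?c i) * (\<Prod>i\<in>{Suc b..n}. phiw q ?c i)"
    using cp_weight_alt[OF cP] prod_split_1n by simp
  also have "(\<Prod>i\<in>{1..b}. phiw q ?c i) = cp_weight q b h"
    unfolding cp_weight_alt[OF h] by (rule prod.cong) (auto simp: phiw_def jn_def)
  also have "(\<Prod>i\<in>{Suc b..n}. phiw q ?c i) = phiw q ?c (Suc b) * (\<Prod>i\<in>{Suc (Suc b)..n}. phiw q ?c i)"
    using bn by (subst atLeastAtMost_insertL[symmetric]) auto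
  also have "phiw q ?c (Suc b) = 1 - q (h b) (Suc b)"
    using cb by (simp add: phiw_def jn_def)
  also have "(\<Prod>i\<in>{Suc (Suc b)..n}. phiw q ?c i) = (\<Prod>i\<in>{Suc (Suc b)..n}. phiw q t i)"
    by (rule prod.cong) (auto simp: phiw_def jn_def)
  finally have w: "cp_weight q n ?c = cp_weight q b h * (1 - q (h b) (Suc b)) * (\<Prod>i\<in>{Suc (Suc b)..n}. phiw q t i)"
    by (simp add: mult_ac)
  have nn1: "0 \<le> cp_weight q b h" using cp_weight_nonneg[OF qok_mono[OF qok] h] bn by simp
  have nn2: "0 \<le> 1 - q (h b) (Suc b)" using qok cp_pathsD(1)[OF h, of b] bn unfolding qok_def by auto
  have nn3: "0 \<le> (\<Prod>i\<in>{Suc (Suc b)..n}. phiw q t i)"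
  proof (rule prod_nonneg)
    fix i assume i: "i \<in> {Suc (Suc b)..n}"
    have "phiw q t i = phiw q ?c i" using i by (auto simp: phiw_def jn_def)
    then show "0 \<le> phiw q t i" using phiw_nonneg[OF qok cP, of i] i by auto
  qed
  show ?thesis unfolding w WT_def using nn1 nn2 nn3 by (simp add: ennreal_mult)
qed

lemma seg_empty:
  assumes "fib m c a = {}" "a \<noteq> max (c k) 1"
  shows "seg m c a g k = 1"
  using assms prob_space.emeasure_space_1[OF J] by (simp add: seg_def)

lemma Lam_split:
  assumes c: "c \<in> Dset"
  shows "Lam n c g b = (\<Prod>a\<in>{1..b}. seg b c a g b) * Psi c" "Lam b c g b = (\<Prod>a\<in>{1..b}. seg b c a g b)"
proof -
  have cP: "c \<in> P" and cb: "c (Suc b) = Suc b" using c by (auto simp: Dset_def)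
  have cbb: "max (c b) 1 \<le> b" using cp_pathsD(1)[OF cP, of b] b1 by simp
  have f1: "fib n c a = fib b c a" if a: "a \<in> {1..b}" for a
  proof -
    have "l \<le> b" if "l \<in> {1..n}" "max (c l) 1 = a" for l
    proof (rule ccontr)
      assume "\<not> l \<le> b"
      then have "c (Suc b) \<le> c l" using path_mono[OF cP, of l "Suc b"] that by simp
      then show False using cb that a by auto
    qed
    then show ?thesis unfolding fib_def using bn by auto
  qed
  have "Lam n c g b = (\<Prod>a\<in>{1..b}. seg n c a g b) * (\<Prod>a\<in>{Suc b..n}. seg n c a g b)"
    unfolding Lam_def by (rule prod_split_1n)
  also have "(\<Prod>a\<in>{1..b}. seg n c a g b) = (\<Prod>a\<in>{1..b}. seg b c a g b)"
    by (rule prod.cong) (auto simp: seg_def f1)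
  also have "(\<Prod>a\<in>{Suc b..n}. seg n c a g b) = Psi c"
    unfolding Psi_def
  proof (rule prod.cong[OF refl])
    fix a assume a: "a \<in> {Suc b..n}"
    then have "a \<noteq> max (c b) 1" using cbb by auto
    then show "seg n c a g b = seg1 n c a" unfolding seg_def seg1_def by simp
  qed
  finally show "Lam n c g b = (\<Prod>a\<in>{1..b}. seg b c a g b) * Psi c" .
  have "Lam b c g b = (\<Prod>a\<in>{1..b}. seg b c a g b) * (\<Prod>a\<in>{Suc b..n}. seg b c a g b)"
    unfolding Lam_def by (rule prod_split_1n)
  also have "(\<Prod>a\<in>{Suc b..n}. seg b c a g b) = 1"
  proof (rule prod.neutral, rule ballI, rule seg_empty)
    fix a assume a: "a \<in> {Suc b..n}"
    show "fib b c a = {}"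
    proof -
      have False if l: "l \<in> {1..b}" "max (c l) 1 = a" for l
      proof -
        have "max (c l) 1 \<le> b" using cp_pathsD(1)[OF cP, of l] l by auto
        then show False using l a by auto
      qed
      then show ?thesis unfolding fib_def by blast
    qed
    show "a \<noteq> max (c b) 1" using a cbb by auto
  qed
  finally show "Lam b c g b = (\<Prod>a\<in>{1..b}. seg b c a g b)" by simp
qed

lemma Psi_jn:
  assumes h: "h \<in> cp_paths b" and t: "t \<in> Tset"
  shows "Psi (jn h t) = Psi t"
proof -
  have "fib n (jn h t) a = fib n t a" if a: "a \<in> {Suc b..n}" for a
  proof -
    have "max (jn h t l) 1 \<noteq> a \<and> max (t l) 1 \<noteq> a" if "l \<le> b" for l
      using that a cp_pathsD(1)[OF h, of l] Tset_zero[OF t that] b1 by (auto simp: jn_def)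
    moreover have "jn h t l = t l" if "\<not> l \<le> b" for l using that by (simp add: jn_def)
    ultimately show ?thesis unfolding fib_def by (metis (no_types, lifting))
  qed
  then show ?thesis unfolding Psi_def seg1_def by (intro prod.cong) auto
qed

lemma sum_D:
  fixes X :: "(nat \<Rightarrow> nat) \<Rightarrow> ennreal"
  assumes Q: "\<And>c c'. (\<And>l. l \<le> b \<Longrightarrow> c l = c' l) \<Longrightarrow> Q c = Q c'"
  shows "(\<Sum>c\<in>P. W c * (if c (Suc b) = Suc b \<and> Q c then X c else 0)) =
    (\<Sum>h\<in>cp_paths b. \<Sum>t\<in>Tset. ennreal (cp_weight q b h) * ennreal (1 - q (h b) (Suc b)) * WT t * (if Q h then X (jn h t) else 0))"
proof -
  have "(\<Sum>c\<in>P. W c * (if c (Suc b) = Suc b \<and> Q c then X c else 0)) = (\<Sum>c\<in>Dset. W c * (if Q c then X c else 0))"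
    unfolding Dset_def by (subst sum.inter_filter[OF finite_cp_paths]) (auto intro!: sum.cong)
  also have "\<dots> = (\<Sum>(h, t)\<in>cp_paths b \<times> Tset. W (jn h t) * (if Q (jn h t) then X (jn h t) else 0))"
    unfolding sum.reindex_bij_betw[OF bij_join, of "\<lambda>c. W c * (if Q c then X c else 0)", symmetric]
    by (intro sum.cong refl) (auto split: prod.splits)
  also have "\<dots> = (\<Sum>h\<in>cp_paths b. \<Sum>t\<in>Tset. W (jn h t) * (if Q (jn h t) then X (jn h t) else 0))"
    by (rule sum.cartesian_product[symmetric])
  also have "\<dots> = (\<Sum>h\<in>cp_paths b. \<Sum>t\<in>Tset. ennreal (cp_weight q b h) * ennreal (1 - q (h b) (Suc b)) * WT t * (if Q h then X (jn h t) else 0))"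
  proof (intro sum.cong refl)
    fix h t assume h: "h \<in> cp_paths b" and t: "t \<in> Tset"
    have "Q (jn h t) = Q h" by (rule Q) (simp add: jn_def)
    then show "W (jn h t) * (if Q (jn h t) then X (jn h t) else 0) =
      ennreal (cp_weight q b h) * ennreal (1 - q (h b) (Suc b)) * WT t * (if Q h then X (jn h t) else 0)"
      using W_jn[OF h t] by simp
  qed
  finally show ?thesis .
qed


lemma finite_Tset: "finite Tset"
  unfolding Tset_def Dset_def using finite_cp_paths by simp

lemma T1_fin: "(\<Sum>t\<in>Tset. WT t) < \<top>"
  using finite_Tset by (simp add: WT_def)

lemma T1_zero: "(\<Sum>t\<in>Tset. WT t) = 0 \<Longrightarrow> (\<Sum>t\<in>Tset. WT t * Psi t) = 0"
  using finite_Tset by (simp add: sum_eq_0_iff)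

definition "AQ Q g = (\<Sum>h\<in>cp_paths b. ennreal (cp_weight q b h) * ennreal (1 - q (h b) (Suc b)) * (if Q h then Lam b h g b else 0))"

lemma S2_fact:
  assumes Q: "\<And>c c'. (\<And>l. l \<le> b \<Longrightarrow> c l = c' l) \<Longrightarrow> Q c = Q c'"
  shows "Phi n (\<lambda>c. c (Suc b) = Suc b \<and> Q c) g b = AQ Q g * (\<Sum>t\<in>Tset. WT t * Psi t)"
    "Phi b (\<lambda>c. c (Suc b) = Suc b \<and> Q c) g b = AQ Q g * (\<Sum>t\<in>Tset. WT t)"
proof -
  have LJ: "Lam b (jn h t) g b = Lam b h g b" for h t by (rule Lam_cong) (auto simp: jn_def)
  have "Phi n (\<lambda>c. c (Suc b) = Suc b \<and> Q c) g b
     = (\<Sum>h\<in>cp_paths b. \<Sum>t\<in>Tset. ennreal (cp_weight q b h) * ennreal (1 - q (h b) (Suc b)) * WT t * (if Q h then Lam n (jn h t) g b else 0))"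
    unfolding Phi_def by (rule sum_D[OF Q])
  also have "\<dots> = (\<Sum>h\<in>cp_paths b. \<Sum>t\<in>Tset. (ennreal (cp_weight q b h) * ennreal (1 - q (h b) (Suc b)) * (if Q h then Lam b h g b else 0)) * (WT t * Psi t))"
  proof (intro sum.cong refl)
    fix h t assume h: "h \<in> cp_paths b" and t: "t \<in> Tset"
    have D: "jn h t \<in> Dset" by (rule jn_path[OF h t])
    have "Lam n (jn h t) g b = Lam b h g b * Psi t"
      using Lam_split[OF D, of g] Psi_jn[OF h t] LJ[of h t] by simp
    then show "ennreal (cp_weight q b h) * ennreal (1 - q (h b) (Suc b)) * WT t * (if Q h then Lam n (jn h t) g b else 0) =
       (ennreal (cp_weight q b h) * ennreal (1 - q (h b) (Suc b)) * (if Q h then Lam b h g b else 0)) * (WT t * Psi t)"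
      by (simp add: mult_ac)
  qed
  also have "\<dots> = AQ Q g * (\<Sum>t\<in>Tset. WT t * Psi t)"
    unfolding AQ_def by (rule sum_product[symmetric])
  finally show "Phi n (\<lambda>c. c (Suc b) = Suc b \<and> Q c) g b = AQ Q g * (\<Sum>t\<in>Tset. WT t * Psi t)" .
  have "Phi b (\<lambda>c. c (Suc b) = Suc b \<and> Q c) g b
     = (\<Sum>h\<in>cp_paths b. \<Sum>t\<in>Tset. ennreal (cp_weight q b h) * ennreal (1 - q (h b) (Suc b)) * WT t * (if Q h then Lam b (jn h t) g b else 0))"
    unfolding Phi_def by (rule sum_D[OF Q])
  also have "\<dots> = (\<Sum>h\<in>cp_paths b. \<Sum>t\<in>Tset. (ennreal (cp_weight q b h) * ennreal (1 - q (h b) (Suc b)) * (if Q h then Lam b h g b else 0)) * WT t)"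
    by (intro sum.cong refl) (simp add: LJ mult_ac)
  also have "\<dots> = AQ Q g * (\<Sum>t\<in>Tset. WT t)"
    unfolding AQ_def by (rule sum_product[symmetric])
  finally show "Phi b (\<lambda>c. c (Suc b) = Suc b \<and> Q c) g b = AQ Q g * (\<Sum>t\<in>Tset. WT t)" .
qed

end

abbreviation "prior \<equiv> cp_prior q n J"
abbreviation "post m \<equiv> cp_post q n J p y m"

definition "Z m = Phi m (\<lambda>_. True) (\<lambda>_. 1) 1"

lemma one_in: "1 \<in> {1..n}" using n_pos by simp

lemma Lam1_k: "Lam m c (\<lambda>_. 1) k = Lam m c (\<lambda>_. 1) k'"
  by (simp add: Lam_1)

lemma Phi1_k: "Phi m Q (\<lambda>_. 1) k = Phi m Q (\<lambda>_. 1) k'"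
  unfolding Phi_def Lam_1 ..

lemma Phi_indJ: "Phi m Q (indicator (space J)) k = Phi m Q (\<lambda>_. 1) k"
proof -
  have "seg m c a (indicator (space J)) k = seg m c a (\<lambda>_. 1) k" for c a
    unfolding seg_def by (rule nn_integral_cong) simp
  then have "Lam m c (indicator (space J)) k = Lam m c (\<lambda>_. 1) k" for c
    unfolding Lam_def by (intro prod.cong refl)
  then show ?thesis unfolding Phi_def by (simp only:)
qed

lemma Z_int: "m \<le> n \<Longrightarrow> (\<integral>\<^sup>+\<omega>. ennreal (cp_lik p y m \<omega>) \<partial>prior) = Z m"
  using NN[of m 1 "\<lambda>_. 1" "\<lambda>_. True"] one_in unfolding Z_def by simp

lemma sumW: "(\<Sum>c\<in>P. W c) = 1"
proof -
  have "(\<Sum>c\<in>P. W c * 1) = (\<Sum>c\<in>cp_paths 0. ennreal (cp_weight q 0 c) * 1)"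
    by (rule marg[OF qok]) auto
  then show ?thesis by (simp add: cp_paths_0 cp_weight_def)
qed

lemma Z_pos_fin: "m \<le> n \<Longrightarrow> Z m \<noteq> 0" "m \<le> n \<Longrightarrow> Z m < \<top>"
proof -
  assume m: "m \<le> n"
  show "Z m < \<top>" unfolding Z_def by (rule Phi_fin[OF m]) simp
  obtain c where c: "c \<in> P" "W c \<noteq> 0" using sumW by (metis sum.neutral zero_neq_one)
  have "W c * Lam m c (\<lambda>_. 1) 1 \<noteq> 0" using c Lam1_pos_fin(1)[OF c(1) m] by simp
  then show "Z m \<noteq> 0" unfolding Z_def Phi_def using c(1) finite_cp_paths by (auto simp: sum_eq_0_iff)
qed

lemma cp_X_meas: "k \<in> {1..n} \<Longrightarrow> cp_X k \<in> measurable prior J"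
proof -
  assume k: "k \<in> {1..n}"
  have "(\<lambda>\<omega>. (\<lambda>c \<omega>. snd \<omega> (max (c k) 1)) (fst \<omega>) \<omega>) \<in> measurable prior J"
  proof (rule measurable_compose_countable'[OF _ fst_meas])
    fix c assume c: "c \<in> P"
    have a: "max (c k) 1 \<in> {1..n}" using cp_pathsD(1)[OF c, of k] k by auto
    show "(\<lambda>\<omega>. snd \<omega> (max (c k) 1)) \<in> measurable prior J"
      using measurable_compose[OF snd_meas comp_meas[OF a]] by simp
  qed (simp add: finite_cp_paths countable_finite)
  moreover have eq: "cp_X k = (\<lambda>\<omega>. snd \<omega> (max (fst \<omega> k) 1))" by (simp add: fun_eq_iff cp_X_def)
  ultimately show ?thesis by (simp only: eq)
qed

lemma ev_sets:
  assumes k: "k \<in> {1..n}" and B: "B \<in> sets J"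
  shows "{\<omega> \<in> space prior. Q (fst \<omega>) \<and> cp_X k \<omega> \<in> B} \<in> sets prior"
proof -
  have "fst -` {c \<in> P. Q c} \<inter> space prior \<in> sets prior"
    by (rule measurable_sets[OF fst_meas]) simp
  moreover have "cp_X k -` B \<inter> space prior \<in> sets prior"
    by (rule measurable_sets[OF cp_X_meas[OF k] B])
  ultimately have "(fst -` {c \<in> P. Q c} \<inter> space prior) \<inter> (cp_X k -` B \<inter> space prior) \<in> sets prior" by blast
  moreover have "(fst -` {c \<in> P. Q c} \<inter> space prior) \<inter> (cp_X k -` B \<inter> space prior) = {\<omega> \<in> space prior. Q (fst \<omega>) \<and> cp_X k \<omega> \<in> B}"
    by (auto simp: space_prior)
  ultimately show ?thesis by simp
qed

lemma space_post: "space (post m) = space prior" "sets (post m) = sets prior"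
  by (simp_all add: cp_post_def normalize_by_def)

lemma lik_meas_prior: "m \<le> n \<Longrightarrow> (\<lambda>\<omega>. ennreal (cp_lik p y m \<omega>)) \<in> borel_measurable prior"
  using F_meas[of m 1 "\<lambda>_. 1" "\<lambda>_. True"] one_in by simp

lemma emeasure_post:
  assumes m: "m \<le> n" and k: "k \<in> {1..n}" and B: "B \<in> sets J"
  shows "emeasure (post m) {\<omega> \<in> space prior. Q (fst \<omega>) \<and> cp_X k \<omega> \<in> B} = Phi m Q (indicator B) k / Z m"
proof -
  let ?S = "{\<omega> \<in> space prior. Q (fst \<omega>) \<and> cp_X k \<omega> \<in> B}"
  have S: "?S \<in> sets prior" by (rule ev_sets[OF k B])
  have "emeasure (post m) ?S = (\<integral>\<^sup>+\<omega>. ennreal (cp_lik p y m \<omega>) / Z m * indicator ?S \<omega> \<partial>prior)"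
    unfolding cp_post_def normalize_by_def Z_int[OF m]
    by (rule emeasure_density) (use lik_meas_prior[OF m] S in auto)
  also have "\<dots> = (\<integral>\<^sup>+\<omega>. ((if Q (fst \<omega>) then indicator B (cp_X k \<omega>) else 0) * ennreal (cp_lik p y m \<omega>)) / Z m \<partial>prior)"
    by (rule nn_integral_cong) (auto simp: indicator_def)
  also have "\<dots> = (\<integral>\<^sup>+\<omega>. (if Q (fst \<omega>) then indicator B (cp_X k \<omega>) else 0) * ennreal (cp_lik p y m \<omega>) \<partial>prior) / Z m"
    by (rule nn_integral_divide) (rule F_meas[OF m k], use B in simp)
  also have "\<dots> = Phi m Q (indicator B) k / Z m"
    using NN[OF m k, of "indicator B" Q] B by simp
  finally show ?thesis .
qed

lemma emeasure_post_ev: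
  assumes m: "m \<le> n"
  shows "emeasure (post m) {\<omega> \<in> space prior. Q (fst \<omega>)} = Phi m Q (\<lambda>_. 1) 1 / Z m"
proof -
  have "{\<omega> \<in> space prior. Q (fst \<omega>)} = {\<omega> \<in> space prior. Q (fst \<omega>) \<and> cp_X 1 \<omega> \<in> space J}"
    using measurable_space[OF cp_X_meas[OF one_in]] by auto
  then show ?thesis using emeasure_post[OF m one_in, of "space J" Q] Phi_indJ by simp
qed

lemma emeasure_cond_on:
  assumes A: "A \<in> sets M" and S: "S \<in> sets M"
  shows "emeasure (cond_on M A) S = (if emeasure M A = 0 then 0 else emeasure M (A \<inter> S) / emeasure M A)"
proof (cases "emeasure M A = 0")
  case True then show ?thesis by (simp add: cond_on_def)
next
  case False
  have "emeasure (cond_on M A) S = emeasure (density M (\<lambda>x. indicator A x / emeasure M A)) S"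
    unfolding cond_on_def using False by simp
  also have "\<dots> = (\<integral>\<^sup>+x. indicator A x / emeasure M A * indicator S x \<partial>M)"
  proof (rule emeasure_density)
    show "(\<lambda>x. indicator A x / emeasure M A) \<in> borel_measurable M" using A by measurable
  qed (rule S)
  also have "\<dots> = (\<integral>\<^sup>+x. indicator (A \<inter> S) x / emeasure M A \<partial>M)"
    by (rule nn_integral_cong) (auto simp: indicator_def)
  also have "\<dots> = emeasure M (A \<inter> S) / emeasure M A"
    using A S by (simp add: nn_integral_divide)
  finally show ?thesis using False by simp
qed

lemma sets_cond_on: "sets (cond_on M A) = sets M" "space (cond_on M A) = space M"
  by (simp_all add: cond_on_def)

lemma cp_X_meas_post: "k \<in> {1..n} \<Longrightarrow> cp_X k \<in> measurable (post m) J"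
  using cp_X_meas measurable_cong_sets[OF space_post(2) refl] by blast

lemma MA_general:
  fixes f :: "'x \<Rightarrow> 'b::{banach, second_countable_topology}" and H :: "'x measure"
  assumes A: "A \<in> sets prior" and b: "b \<in> {1..n}" and r: "0 \<le> r" and sH: "sets H = sets J"
    and eqm: "\<And>S. S \<in> sets J \<Longrightarrow> emeasure (post n) (A \<inter> (cp_X b -` S \<inter> space prior)) = ennreal r * emeasure H S"
    and fi: "integrable H f" and fm: "f \<in> borel_measurable J"
  shows "integrable (post n) (\<lambda>\<omega>. indicator A \<omega> *\<^sub>R f (cp_X b \<omega>))"
    "(\<integral>\<omega>. indicator A \<omega> *\<^sub>R f (cp_X b \<omega>) \<partial>post n) = r *\<^sub>R (\<integral>x. f x \<partial>H)"
proof -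
  define M1 where "M1 = density (post n) (\<lambda>\<omega>. ennreal (indicator A \<omega>))"
  have ind: "(\<lambda>\<omega>. ennreal (indicator A \<omega>)) = indicator A" by (auto simp: fun_eq_iff indicator_def)
  have Ap: "A \<in> sets (post n)" using A space_post by simp
  have sM1: "sets M1 = sets (post n)" "space M1 = space (post n)" by (simp_all add: M1_def)
  have XM1: "cp_X b \<in> measurable M1 J"
    using cp_X_meas_post[OF b] measurable_cong_sets[OF sM1(1) refl] by blast
  have Xp: "cp_X b \<in> measurable (post n) J" using cp_X_meas_post[OF b] .
  have fH: "f \<in> borel_measurable H" using fm measurable_cong_sets[OF sH refl] by blast
  have meq: "distr M1 J (cp_X b) = density H (\<lambda>_. ennreal r)"
  proof (rule measure_eqI)
    show "sets (distr M1 J (cp_X b)) = sets (density H (\<lambda>_. ennreal r))" using sH by simp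
  next
    fix S assume "S \<in> sets (distr M1 J (cp_X b))"
    then have S: "S \<in> sets J" by simp
    have T: "cp_X b -` S \<inter> space prior \<in> sets (post n)"
      using measurable_sets[OF Xp S] space_post by simp
    have "emeasure (distr M1 J (cp_X b)) S = emeasure M1 (cp_X b -` S \<inter> space M1)"
      by (rule emeasure_distr[OF XM1 S])
    also have "\<dots> = emeasure (post n) (A \<inter> (cp_X b -` S \<inter> space prior))"
      unfolding M1_def ind using sM1 space_post emeasure_restricted[OF Ap T] by (simp add: M1_def)
    also have "\<dots> = ennreal r * emeasure H S" by (rule eqm[OF S])
    also have "\<dots> = emeasure (density H (\<lambda>_. ennreal r)) S"
      using S sH by (simp add: emeasure_density_const)
    finally show "emeasure (distr M1 J (cp_X b)) S = emeasure (density H (\<lambda>_. ennreal r)) S" .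
  qed
  have iD: "integrable (density H (\<lambda>_. ennreal r)) f"
    using fi fH r by (subst integrable_density) auto
  have intD: "(\<integral>x. f x \<partial>density H (\<lambda>_. ennreal r)) = r *\<^sub>R (\<integral>x. f x \<partial>H)"
    using fH r by (subst integral_density) auto
  have iM1: "integrable M1 (\<lambda>\<omega>. f (cp_X b \<omega>))"
    using iD meq integrable_distr_eq[OF XM1 fm] by simp
  have indm: "indicator A \<in> borel_measurable (post n)" using Ap by simp
  have fXm: "(\<lambda>\<omega>. f (cp_X b \<omega>)) \<in> borel_measurable (post n)"
    using measurable_compose[OF Xp fm] .
  show "integrable (post n) (\<lambda>\<omega>. indicator A \<omega> *\<^sub>R f (cp_X b \<omega>))"
    using iM1 unfolding M1_def using integrable_density[OF fXm indm] by simp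
  have "(\<integral>\<omega>. indicator A \<omega> *\<^sub>R f (cp_X b \<omega>) \<partial>post n) = (\<integral>\<omega>. f (cp_X b \<omega>) \<partial>M1)"
    unfolding M1_def using integral_density[OF fXm indm] by simp
  also have "\<dots> = (\<integral>x. f x \<partial>distr M1 J (cp_X b))"
    by (rule integral_distr[OF XM1 fm, symmetric])
  also have "\<dots> = r *\<^sub>R (\<integral>x. f x \<partial>H)" using meq intD by simp
  finally show "(\<integral>\<omega>. indicator A \<omega> *\<^sub>R f (cp_X b \<omega>) \<partial>post n) = r *\<^sub>R (\<integral>x. f x \<partial>H)" .
qed

definition "ph m Q g k = enn2real (Phi m Q g k)"
definition "zz m = enn2real (Z m)"

lemma ph_nonneg: "0 \<le> ph m Q g k" by (simp add: ph_def)

lemma Phi_ennreal: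
  assumes "m \<le> n" "\<And>x. x \<in> space J \<Longrightarrow> g x \<le> 1"
  shows "Phi m Q g k = ennreal (ph m Q g k)"
  using Phi_fin[OF assms, where Q=Q and k=k] by (simp add: ph_def ennreal_enn2real)

lemma Z_ennreal: "m \<le> n \<Longrightarrow> Z m = ennreal (zz m)" "m \<le> n \<Longrightarrow> 0 < zz m"
proof -
  assume m: "m \<le> n"
  show "Z m = ennreal (zz m)" using Z_pos_fin(2)[OF m] by (simp add: zz_def ennreal_enn2real)
  have "0 < Z m" using Z_pos_fin(1)[OF m] by (simp add: zero_less_iff_neq_zero)
  then show "0 < zz m" using Z_pos_fin(2)[OF m] by (simp add: zz_def enn2real_positive_iff)
qed

lemma ind_le1: "indicator S x \<le> (1::ennreal)" by (simp add: indicator_def)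

lemma ph1_k: "ph m Q (\<lambda>_. 1) k = ph m Q (\<lambda>_. 1) k'"
  unfolding ph_def using Phi1_k by metis

lemma post_ev_real:
  assumes m: "m \<le> n"
  shows "emeasure (post m) {\<omega> \<in> space prior. Q (fst \<omega>)} = ennreal (ph m Q (\<lambda>_. 1) 1 / zz m)"
proof -
  have "Phi m Q (\<lambda>_. 1) 1 = ennreal (ph m Q (\<lambda>_. 1) 1)" by (rule Phi_ennreal[OF m]) simp
  then show ?thesis unfolding emeasure_post_ev[OF m] Z_ennreal(1)[OF m]
    using Z_ennreal(2)[OF m] ph_nonneg by (simp add: divide_ennreal)
qed

lemma post_evX_real:
  assumes m: "m \<le> n" and k: "k \<in> {1..n}" and S: "S \<in> sets J"
  shows "emeasure (post m) {\<omega> \<in> space prior. Q (fst \<omega>) \<and> cp_X k \<omega> \<in> S} = ennreal (ph m Q (indicator S) k / zz m)"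
proof -
  have "Phi m Q (indicator S) k = ennreal (ph m Q (indicator S) k)" by (rule Phi_ennreal[OF m ind_le1])
  then show ?thesis unfolding emeasure_post[OF m k S] Z_ennreal(1)[OF m]
    using Z_ennreal(2)[OF m] ph_nonneg by (simp add: divide_ennreal)
qed

lemma ediv2:
  fixes x w z :: real
  assumes "0 \<le> x" "0 \<le> w" "0 < z"
  shows "(if ennreal (w / z) = 0 then 0 else ennreal (x / z) / ennreal (w / z)) = ennreal (x / w)"
proof (cases "w = 0")
  case True then show ?thesis by simp
next
  case False
  then have "w / z > 0" using assms by simp
  then show ?thesis using assms by (simp add: divide_ennreal)
qed

lemma cp_ev_eq: "cp_ev q n J i j = {\<omega> \<in> space prior. (\<lambda>c. c i = j) (fst \<omega>)}"
  by (simp add: cp_ev_def cp_C_def)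

lemma ev_sets': "{\<omega> \<in> space prior. Q (fst \<omega>)} \<in> sets prior"
proof -
  have "fst -` {c \<in> P. Q c} \<inter> space prior \<in> sets prior"
    by (rule measurable_sets[OF fst_meas]) simp
  moreover have "fst -` {c \<in> P. Q c} \<inter> space prior = {\<omega> \<in> space prior. Q (fst \<omega>)}"
    by (auto simp: space_prior)
  ultimately show ?thesis by simp
qed

lemma ct_lt:
  assumes b: "b < n"
  shows "cp_ct q n J p y j b = ph b (\<lambda>c. c (Suc b) = Suc b \<and> c b = j) (\<lambda>_. 1) 1 / ph b (\<lambda>c. c (Suc b) = Suc b) (\<lambda>_. 1) 1"
proof -
  have bn: "b \<le> n" using b by simp
  let ?D = "cp_ev q n J (b + 1) (b + 1)" and ?E = "cp_ev q n J b j"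
  have D: "?D \<in> sets (post b)" and E: "?E \<in> sets (post b)"
    unfolding cp_ev_eq space_post by (rule ev_sets')+
  have DE: "?D \<inter> ?E = {\<omega> \<in> space prior. (\<lambda>c. c (Suc b) = Suc b \<and> c b = j) (fst \<omega>)}"
    unfolding cp_ev_eq by auto
  have e1: "emeasure (post b) {\<omega> \<in> space prior. fst \<omega> (Suc b) = Suc b} = ennreal (ph b (\<lambda>c. c (Suc b) = Suc b) (\<lambda>_. 1) 1 / zz b)"
    using post_ev_real[OF bn, of "\<lambda>c. c (Suc b) = Suc b"] by simp
  have e2: "emeasure (post b) {\<omega> \<in> space prior. fst \<omega> (Suc b) = Suc b \<and> fst \<omega> b = j} = ennreal (ph b (\<lambda>c. c (Suc b) = Suc b \<and> c b = j) (\<lambda>_. 1) 1 / zz b)"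
    using post_ev_real[OF bn, of "\<lambda>c. c (Suc b) = Suc b \<and> c b = j"] by simp
  have "emeasure (cond_on (post b) ?D) ?E = ennreal (ph b (\<lambda>c. c (Suc b) = Suc b \<and> c b = j) (\<lambda>_. 1) 1 / ph b (\<lambda>c. c (Suc b) = Suc b) (\<lambda>_. 1) 1)"
    unfolding emeasure_cond_on[OF D E] DE
    unfolding cp_ev_eq Suc_eq_plus1[symmetric] e1 e2
    by (rule ediv2) (simp_all add: ph_nonneg Z_ennreal(2)[OF bn])
  then show ?thesis using b by (simp add: cp_ct_def measure_def ph_nonneg)
qed

lemma ct_n:
  shows "cp_ct q n J p y j n = ph n (\<lambda>c. c n = j) (\<lambda>_. 1) 1 / zz n"
  using post_ev_real[of n "\<lambda>c. c n = j"]
  by (simp add: cp_ct_def measure_def cp_ev_eq ph_nonneg Z_ennreal(2) divide_nonneg_pos)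

lemma qt_eq:
  shows "cp_qt q n J p y i = ph n (\<lambda>c. c i = i) (\<lambda>_. 1) 1 / zz n"
  using post_ev_real[of n "\<lambda>c. c i = i"]
  by (simp add: cp_qt_def measure_def cp_ev_eq ph_nonneg Z_ennreal(2) divide_nonneg_pos)

lemma sets_H: "sets (cp_H q n J p y j b) = sets J"
  by (simp add: cp_H_def)

lemma H_eq:
  assumes b: "b \<in> {1..n}" and S: "S \<in> sets J"
  shows "emeasure (cp_H q n J p y j b) S = ennreal (ph b (\<lambda>c. c b = j) (indicator S) b / ph b (\<lambda>c. c b = j) (\<lambda>_. 1) b)"
proof -
  have bn: "b \<le> n" using b by simp
  let ?E = "cp_ev q n J b j"
  have E: "?E \<in> sets (post b)" unfolding cp_ev_eq space_post by (rule ev_sets')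
  have Xc: "cp_X b \<in> measurable (cond_on (post b) ?E) J"
    using cp_X_meas_post[OF b] measurable_cong_sets[OF sets_cond_on(1) refl] by blast
  have T: "cp_X b -` S \<inter> space prior \<in> sets (post b)"
    using measurable_sets[OF cp_X_meas_post[OF b] S] space_post by simp
  have ET: "?E \<inter> (cp_X b -` S \<inter> space prior) = {\<omega> \<in> space prior. (\<lambda>c. c b = j) (fst \<omega>) \<and> cp_X b \<omega> \<in> S}"
    unfolding cp_ev_eq by auto
  have "emeasure (cp_H q n J p y j b) S = emeasure (cond_on (post b) ?E) (cp_X b -` S \<inter> space prior)"
    unfolding cp_H_def using emeasure_distr[OF Xc S] by (simp add: sets_cond_on space_post)
  also have "\<dots> = ennreal (ph b (\<lambda>c. c b = j) (indicator S) b / ph b (\<lambda>c. c b = j) (\<lambda>_. 1) 1)"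
  proof -
    have e1: "emeasure (post b) {\<omega> \<in> space prior. fst \<omega> b = j} = ennreal (ph b (\<lambda>c. c b = j) (\<lambda>_. 1) 1 / zz b)"
      using post_ev_real[OF bn, of "\<lambda>c. c b = j"] by simp
    have e2: "emeasure (post b) {\<omega> \<in> space prior. fst \<omega> b = j \<and> cp_X b \<omega> \<in> S} = ennreal (ph b (\<lambda>c. c b = j) (indicator S) b / zz b)"
      using post_evX_real[OF bn b S, of "\<lambda>c. c b = j"] by simp
    show ?thesis
      unfolding emeasure_cond_on[OF E T] ET
      unfolding cp_ev_eq e1 e2
      by (rule ediv2) (simp_all add: ph_nonneg Z_ennreal(2)[OF bn])
  qed
  finally show ?thesis using ph1_k by metis
qed

lemma real_alg:
  fixes x1 x2 x3 t1 tp al be u z :: real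
  assumes nn: "0 \<le> x1" "0 \<le> x2" "0 \<le> x3" "0 \<le> t1" "0 \<le> tp" "0 \<le> al" "0 \<le> u" "0 < z"
    and t0: "t1 = 0 \<Longrightarrow> tp = 0" and le1: "x1 * t1 \<le> x3 * t1" and le2: "al \<le> be"
    and s1: "x1 * t1 = u * al" and s2: "x2 * t1 = u * be"
  shows "x1 * tp / z = (x2 * t1 / (x3 * t1)) * (x3 * tp / z) * (al / be)"
proof (cases "t1 = 0")
  case True then show ?thesis using t0 by simp
next
  case t: False
  then have t1p: "t1 > 0" using nn by simp
  show ?thesis
  proof (cases "x3 = 0")
    case True
    then have "x1 = 0" using le1 t1p nn by (simp add: mult_le_0_iff)
    then show ?thesis using True by simp
  next
    case x3: False
    show ?thesis
    proof (cases "be = 0")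
      case True
      then have "al = 0" using le2 nn by simp
      then have "x1 = 0" using s1 t by simp
      then show ?thesis using True by simp
    next
      case be: False
      show ?thesis
      proof (cases "u = 0")
        case True
        then have "x1 = 0" "x2 = 0" using s1 s2 t by auto
        then show ?thesis by simp
      next
        case u: False
        have "x1 * be = x2 * al"
        proof -
          have "x1 * t1 * (u * be) = x2 * t1 * (u * al)" using s1 s2 by (simp add: mult_ac)
          then have "(x1 * be) * (t1 * u) = (x2 * al) * (t1 * u)" by (simp add: mult_ac)
          then show ?thesis using t u by simp
        qed
        then show ?thesis using t x3 be nn by (simp add: field_simps)
      qed
    qed
  qed
qed

lemma Phi_le_real:
  assumes m: "m \<le> n" and "\<And>c. c \<in> P \<Longrightarrow> Q c \<Longrightarrow> Q' c" and g: "\<And>x. x \<in> space J \<Longrightarrow> g x \<le> 1"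
  shows "ph m Q g k \<le> ph m Q' (\<lambda>_. 1) k"
proof -
  have "Phi m Q g k \<le> Phi m Q' (\<lambda>_. 1) k"
    by (rule Phi_mono) (use assms Lam_le in auto)
  moreover have "Phi m Q' (\<lambda>_. 1) k < \<top>" by (rule Phi_fin[OF m]) simp
  ultimately show ?thesis unfolding ph_def by (simp add: enn2real_mono)
qed

lemma TA:
  assumes b1: "1 \<le> b" and bn: "b < n" and S: "S \<in> sets J"
  shows "emeasure (post n) ({\<omega> \<in> space prior. fst \<omega> b = a \<and> fst \<omega> (Suc b) = Suc b} \<inter> (cp_X b -` S \<inter> space prior))
     = ennreal (cp_ct q n J p y a b * cp_qt q n J p y (Suc b)) * emeasure (cp_H q n J p y a b) S"
proof -
  have bn': "b \<le> n" and bI: "b \<in> {1..n}" using b1 bn by auto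
  define DE where "DE = (\<lambda>c::nat\<Rightarrow>nat. c (Suc b) = Suc b \<and> c b = a)"
  define D where "D = (\<lambda>c::nat\<Rightarrow>nat. c (Suc b) = Suc b)"
  define E where "E = (\<lambda>c::nat\<Rightarrow>nat. c b = a)"
  have set_eq: "{\<omega> \<in> space prior. fst \<omega> b = a \<and> fst \<omega> (Suc b) = Suc b} \<inter> (cp_X b -` S \<inter> space prior)
      = {\<omega> \<in> space prior. DE (fst \<omega>) \<and> cp_X b \<omega> \<in> S}" by (auto simp: DE_def)
  have lhs: "emeasure (post n) ({\<omega> \<in> space prior. fst \<omega> b = a \<and> fst \<omega> (Suc b) = Suc b} \<inter> (cp_X b -` S \<inter> space prior))
     = ennreal (ph n DE (indicator S) b / zz n)"
    unfolding set_eq by (rule post_evX_real[OF order_refl bI S])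
  have ct: "cp_ct q n J p y a b = ph b DE (\<lambda>_. 1) b / ph b D (\<lambda>_. 1) b"
    unfolding ct_lt[OF bn] DE_def D_def ph1_k[where k=1 and k'=b] ..
  have qt: "cp_qt q n J p y (Suc b) = ph n D (\<lambda>_. 1) b / zz n"
    unfolding qt_eq D_def ph1_k[where k=1 and k'=b] ..
  have H: "emeasure (cp_H q n J p y a b) S = ennreal (ph b E (indicator S) b / ph b E (\<lambda>_. 1) b)"
    unfolding E_def by (rule H_eq[OF bI S])
  define x1 where "x1 = enn2real (AQ b E (indicator S))"
  define x2 where "x2 = enn2real (AQ b E (\<lambda>_. 1))"
  define x3 where "x3 = enn2real (AQ b (\<lambda>_. True) (\<lambda>_. 1))"
  define t1 where "t1 = enn2real (\<Sum>t\<in>Tset b. WT b t)"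
  define tp where "tp = enn2real (\<Sum>t\<in>Tset b. WT b t * Psi b t)"
  define u where "u = enn2real (ennreal (1 - q a (Suc b)))"
  have Econg: "\<And>c c'. (\<And>l. l \<le> b \<Longrightarrow> c l = c' l) \<Longrightarrow> E c = E c'" by (simp add: E_def)
  have Tcong: "\<And>c c'. (\<And>l. l \<le> b \<Longrightarrow> c l = c' l) \<Longrightarrow> True = True" by simp
  have DEe: "(\<lambda>c. c (Suc b) = Suc b \<and> E c) = DE" by (simp add: DE_def E_def)
  have De: "(\<lambda>c. c (Suc b) = Suc b \<and> True) = D" by (simp add: D_def)
  have f1: "ph n DE (indicator S) b = x1 * tp"
    using S2_fact(1)[where Q=E and g="indicator S", OF b1 bn Econg] unfolding DEe ph_def x1_def tp_def by (simp add: enn2real_mult)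
  have f2: "ph b DE (indicator S) b = x1 * t1"
    using S2_fact(2)[where Q=E and g="indicator S", OF b1 bn Econg] unfolding DEe ph_def x1_def t1_def by (simp add: enn2real_mult)
  have f3: "ph b DE (\<lambda>_. 1) b = x2 * t1"
    using S2_fact(2)[where Q=E and g="\<lambda>_. 1", OF b1 bn Econg] unfolding DEe ph_def x2_def t1_def by (simp add: enn2real_mult)
  have f4: "ph b D (\<lambda>_. 1) b = x3 * t1"
    using S2_fact(2)[where Q="\<lambda>_. True" and g="\<lambda>_. 1", OF b1 bn refl] unfolding De ph_def x3_def t1_def by (simp add: enn2real_mult)
  have f5: "ph n D (\<lambda>_. 1) b = x3 * tp"
    using S2_fact(1)[where Q="\<lambda>_. True" and g="\<lambda>_. 1", OF b1 bn refl] unfolding De ph_def x3_def tp_def by (simp add: enn2real_mult)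
  have EDe: "(\<lambda>c. c b = a \<and> c (Suc b) = Suc b) = DE" by (auto simp: DE_def)
  have s1: "ph b DE g b = u * ph b E g b" for g
    using S1[OF bn, where a=a and g=g] unfolding EDe ph_def u_def E_def by (simp add: enn2real_mult)
  have t0: "t1 = 0 \<Longrightarrow> tp = 0"
  proof -
    assume "t1 = 0"
    then have "(\<Sum>t\<in>Tset b. WT b t) = 0" using T1_fin[OF b1 bn] unfolding t1_def
      by (auto simp: enn2real_eq_0_iff)
    then show "tp = 0" unfolding tp_def using T1_zero[OF b1 bn] by simp
  qed
  have le1: "x1 * t1 \<le> x3 * t1"
    unfolding f2[symmetric] f4[symmetric] by (rule Phi_le_real[OF bn' _ ind_le1]) (simp add: DE_def D_def)
  have le2: "ph b E (indicator S) b \<le> ph b E (\<lambda>_. 1) b"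
    by (rule Phi_le_real[OF bn' _ ind_le1])
  have key: "x1 * tp / zz n = (x2 * t1 / (x3 * t1)) * (x3 * tp / zz n) * (ph b E (indicator S) b / ph b E (\<lambda>_. 1) b)"
  proof (rule real_alg[of x1 x2 x3 t1 tp "ph b E (indicator S) b" u "zz n" "ph b E (\<lambda>_. 1) b", OF _ _ _ _ _ _ _ _ t0 le1 le2])
    show "x1 * t1 = u * ph b E (indicator S) b" using f2 s1 by simp
    show "x2 * t1 = u * ph b E (\<lambda>_. 1) b" using f3 s1 by simp
    show "0 < zz n" by (rule Z_ennreal(2)) simp
  qed (simp_all add: x1_def x2_def x3_def t1_def tp_def u_def ph_nonneg)
  have nn: "0 \<le> cp_ct q n J p y a b * cp_qt q n J p y (Suc b)"
    unfolding ct qt by (intro mult_nonneg_nonneg divide_nonneg_nonneg ph_nonneg) (use Z_ennreal(2)[of n] in auto)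
  have "ennreal (cp_ct q n J p y a b * cp_qt q n J p y (Suc b)) * emeasure (cp_H q n J p y a b) S
     = ennreal (cp_ct q n J p y a b * cp_qt q n J p y (Suc b) * (ph b E (indicator S) b / ph b E (\<lambda>_. 1) b))"
    unfolding H by (rule ennreal_mult'[OF nn, symmetric])
  also have "cp_ct q n J p y a b * cp_qt q n J p y (Suc b) * (ph b E (indicator S) b / ph b E (\<lambda>_. 1) b)
     = x1 * tp / zz n"
    unfolding key ct qt f3 f4 f5 ..
  finally show ?thesis unfolding lhs f1 by simp
qed

lemma TAn:
  assumes S: "S \<in> sets J"
  shows "emeasure (post n) ({\<omega> \<in> space prior. fst \<omega> n = a} \<inter> (cp_X n -` S \<inter> space prior))
     = ennreal (cp_ct q n J p y a n) * emeasure (cp_H q n J p y a n) S"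
proof -
  have nI: "n \<in> {1..n}" using n_pos by simp
  define E where "E = (\<lambda>c::nat\<Rightarrow>nat. c n = a)"
  have set_eq: "{\<omega> \<in> space prior. fst \<omega> n = a} \<inter> (cp_X n -` S \<inter> space prior)
      = {\<omega> \<in> space prior. E (fst \<omega>) \<and> cp_X n \<omega> \<in> S}" by (auto simp: E_def)
  have lhs: "emeasure (post n) ({\<omega> \<in> space prior. fst \<omega> n = a} \<inter> (cp_X n -` S \<inter> space prior))
     = ennreal (ph n E (indicator S) n / zz n)"
    unfolding set_eq by (rule post_evX_real[OF order_refl nI S])
  have ct: "cp_ct q n J p y a n = ph n E (\<lambda>_. 1) n / zz n"
    unfolding ct_n E_def ph1_k[where k=1 and k'=n] ..
  have H: "emeasure (cp_H q n J p y a n) S = ennreal (ph n E (indicator S) n / ph n E (\<lambda>_. 1) n)"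
    unfolding E_def by (rule H_eq[OF nI S])
  have z: "0 < zz n" by (rule Z_ennreal(2)) simp
  have le: "ph n E (indicator S) n \<le> ph n E (\<lambda>_. 1) n"
    by (rule Phi_le_real[OF order_refl _ ind_le1])
  have key: "ph n E (indicator S) n / zz n = (ph n E (\<lambda>_. 1) n / zz n) * (ph n E (indicator S) n / ph n E (\<lambda>_. 1) n)"
  proof (cases "ph n E (\<lambda>_. 1) n = 0")
    case True
    then have "ph n E (indicator S) n = 0" using le ph_nonneg[of n E "indicator S" n] by simp
    then show ?thesis using True by simp
  next
    case False then show ?thesis using z by (simp add: field_simps)
  qed
  have nn: "0 \<le> ph n E (\<lambda>_. 1) n / zz n" using z ph_nonneg by simp
  show ?thesis unfolding lhs H ct key by (rule ennreal_mult'[OF nn])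
qed

definition "Aset a b = {\<omega> \<in> space prior. fst \<omega> b = a \<and> (b = n \<or> fst \<omega> (Suc b) = Suc b)}"
definition "coef a b = (if b < n then cp_ct q n J p y a b * cp_qt q n J p y (Suc b) else cp_ct q n J p y a b)"

lemma Aset_sets: "Aset a b \<in> sets prior"
  unfolding Aset_def using ev_sets'[of "\<lambda>c. c b = a \<and> (b = n \<or> c (Suc b) = Suc b)"] by simp

lemma coef_nonneg: "0 \<le> coef a b"
  by (simp add: coef_def cp_ct_def cp_qt_def)

lemma term_int:
  fixes f :: "'x \<Rightarrow> 'b::{banach, second_countable_topology}"
  assumes b: "b \<in> {1..n}" and fi: "integrable (cp_H q n J p y a b) f" and fm: "f \<in> borel_measurable J"
  shows "integrable (post n) (\<lambda>\<omega>. indicator (Aset a b) \<omega> *\<^sub>R f (cp_X b \<omega>))"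
    "(\<integral>\<omega>. indicator (Aset a b) \<omega> *\<^sub>R f (cp_X b \<omega>) \<partial>post n) = coef a b *\<^sub>R (\<integral>x. f x \<partial>cp_H q n J p y a b)"
proof -
  have eqm: "emeasure (post n) (Aset a b \<inter> (cp_X b -` S \<inter> space prior)) = ennreal (coef a b) * emeasure (cp_H q n J p y a b) S"
    if S: "S \<in> sets J" for S
  proof (cases "b < n")
    case True
    have "Aset a b = {\<omega> \<in> space prior. fst \<omega> b = a \<and> fst \<omega> (Suc b) = Suc b}"
      using True by (auto simp: Aset_def)
    then show ?thesis using TA[of b S a] b True S by (simp add: coef_def)
  next
    case False
    then have bn: "b = n" using b by simp
    have "Aset a b = {\<omega> \<in> space prior. fst \<omega> n = a}"
      using bn by (auto simp: Aset_def)
    then show ?thesis using TAn[OF S, of a] bn by (simp add: coef_def)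
  qed
  show "integrable (post n) (\<lambda>\<omega>. indicator (Aset a b) \<omega> *\<^sub>R f (cp_X b \<omega>))"
    by (rule MA_general(1)[OF Aset_sets b coef_nonneg sets_H eqm fi fm])
  show "(\<integral>\<omega>. indicator (Aset a b) \<omega> *\<^sub>R f (cp_X b \<omega>) \<partial>post n) = coef a b *\<^sub>R (\<integral>x. f x \<partial>cp_H q n J p y a b)"
    by (rule MA_general(2)[OF Aset_sets b coef_nonneg sets_H eqm fi fm])
qed

lemma const_run:
  assumes c: "c \<in> P" and kb: "k \<le> b" and bn: "b \<le> n"
    and nr: "\<And>l. k \<le> l \<Longrightarrow> l < b \<Longrightarrow> c (Suc l) \<noteq> Suc l"
  shows "c b = c k"
  using kb bn nr
proof (induction b)
  case 0 then show ?case by simp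
next
  case (Suc b)
  show ?case
  proof (cases "k = Suc b")
    case True then show ?thesis by simp
  next
    case False
    then have kb: "k \<le> b" using Suc by simp
    have IH: "c b = c k" using Suc kb by simp
    have ns: "c (Suc b) \<noteq> Suc b" using Suc.prems(3)[of b] kb by simp
    show ?thesis
    proof (cases b)
      case 0
      then have "c 1 \<le> 1" using cp_pathsD(1)[OF c, of 1] by simp
      then have "c 1 = 0" using ns 0 by simp
      then show ?thesis using IH 0 cp_pathsD(2)[OF c, of 0] by simp
    next
      case (Suc b')
      have "Suc b \<in> {2..n}" using Suc.prems Suc by auto
      then have "c (Suc b) = c b \<or> c (Suc b) = Suc b" using cp_pathsD(3)[OF c, of "Suc b"] by simp
      then show ?thesis using ns IH by simp
    qed
  qed
qed

lemma seg_char: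
  assumes c: "c \<in> P" and k: "k \<in> {1..n}"
  defines "b0 \<equiv> LEAST b. k \<le> b \<and> (b = n \<or> c (Suc b) = Suc b)"
  shows "k \<le> b0" "b0 \<le> n" "c b0 = c k"
    "\<And>b a. b \<in> {k..n} \<Longrightarrow> a \<le> k \<Longrightarrow> (c b = a \<and> (b = n \<or> c (Suc b) = Suc b)) \<longleftrightarrow> (b = b0 \<and> a = c k)"
proof -
  have ex: "k \<le> n \<and> (n = n \<or> c (Suc n) = Suc n)" using k by simp
  have L: "k \<le> b0 \<and> (b0 = n \<or> c (Suc b0) = Suc b0)"
    unfolding b0_def by (rule LeastI[of "\<lambda>b. k \<le> b \<and> (b = n \<or> c (Suc b) = Suc b)" n, OF ex])
  have Ln: "b0 \<le> n" unfolding b0_def by (rule Least_le[of "\<lambda>b. k \<le> b \<and> (b = n \<or> c (Suc b) = Suc b)" n, OF ex])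
  show "k \<le> b0" "b0 \<le> n" using L Ln by auto
  have nr: "c (Suc l) \<noteq> Suc l" if "k \<le> l" "l < b0" for l
  proof -
    have "\<not> (k \<le> l \<and> (l = n \<or> c (Suc l) = Suc l))" using not_less_Least[OF that(2)[unfolded b0_def]] by (simp add: b0_def)
    then show ?thesis using that by simp
  qed
  show cb0: "c b0 = c k" by (rule const_run[OF c _ Ln nr]) (use L in auto)
  fix b a assume b: "b \<in> {k..n}" and a: "a \<le> k"
  show "(c b = a \<and> (b = n \<or> c (Suc b) = Suc b)) \<longleftrightarrow> (b = b0 \<and> a = c k)"
  proof
    assume h: "c b = a \<and> (b = n \<or> c (Suc b) = Suc b)"
    have "b0 \<le> b" unfolding b0_def by (rule Least_le[of "\<lambda>b. k \<le> b \<and> (b = n \<or> c (Suc b) = Suc b)" b]) (use h b in auto)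
    moreover have "\<not> b0 < b"
    proof
      assume lt: "b0 < b"
      then have "b0 \<noteq> n" using b by simp
      then have r: "c (Suc b0) = Suc b0" using L by simp
      have "c (Suc b0) \<le> c b" using path_mono[OF c, of b "Suc b0"] lt b by simp
      then show False using r h a L by simp
    qed
    ultimately have "b = b0" by simp
    then show "b = b0 \<and> a = c k" using h cb0 by simp
  next
    assume "b = b0 \<and> a = c k"
    then show "c b = a \<and> (b = n \<or> c (Suc b) = Suc b)" using L cb0 by simp
  qed
qed

lemma decomp:
  fixes f :: "'x \<Rightarrow> 'b::real_vector"
  assumes w: "\<omega> \<in> space prior" and k: "k \<in> {1..n}"
  shows "f (cp_X k \<omega>) = (\<Sum>b\<in>{k..n}. \<Sum>a\<in>{0..k}. indicator (Aset a b) \<omega> *\<^sub>R f (cp_X b \<omega>))"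
proof -
  obtain c z where cz: "\<omega> = (c, z)" by (cases \<omega>)
  have c: "c \<in> P" using w cz by (simp add: space_prior)
  define b0 where "b0 = (LEAST b. k \<le> b \<and> (b = n \<or> c (Suc b) = Suc b))"
  note sc = seg_char[OF c k, folded b0_def]
  have ck: "c k \<le> k" using cp_pathsD(1)[OF c] by simp
  have ind: "indicator (Aset a b) \<omega> = (if b = b0 \<and> a = c k then 1 else (0::real))"
    if "b \<in> {k..n}" "a \<in> {0..k}" for a b
    using sc(4)[OF that(1), of a] that w cz by (simp add: Aset_def indicator_def)
  have "(\<Sum>b\<in>{k..n}. \<Sum>a\<in>{0..k}. indicator (Aset a b) \<omega> *\<^sub>R f (cp_X b \<omega>))
      = (\<Sum>b\<in>{k..n}. \<Sum>a\<in>{0..k}. (if b = b0 \<and> a = c k then f (cp_X b \<omega>) else 0))"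
    by (intro sum.cong refl) (simp add: ind)
  also have "\<dots> = (\<Sum>b\<in>{k..n}. if b = b0 then f (cp_X b \<omega>) else 0)"
    by (intro sum.cong refl) (use ck in \<open>auto simp: sum.delta'\<close>)
  also have "\<dots> = f (cp_X b0 \<omega>)" using sc(1,2) by (simp add: sum.delta')
  also have "cp_X b0 \<omega> = cp_X k \<omega>" using sc(3) cz by (simp add: cp_X_def)
  finally show ?thesis ..
qed

end



lemma grp_id: "(a::'a::ab_group_add) + b = b + (s + t) - s - t + a"
  by (simp add: algebra_simps)

theorem mainTheorem12:
  fixes n :: nat and q :: "nat \<Rightarrow> nat \<Rightarrow> real"
    and J :: "'x measure" and \<psi> :: "'y measure"
    and p :: "'x \<Rightarrow> 'y \<Rightarrow> real" and y :: "nat \<Rightarrow> 'y"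
    and f :: "'x \<Rightarrow> real ^ 'u" and i :: nat
  assumes n: "n \<ge> 1"
    and J: "prob_space J"
    and psi: "sigma_finite_measure \<psi>"
    and q: "\<And>j k. j < k \<Longrightarrow> k \<le> n \<Longrightarrow> 0 \<le> q j k \<and> q j k \<le> 1"
    and p_meas: "(\<lambda>(x, v). p x v) \<in> borel_measurable (J \<Otimes>\<^sub>M \<psi>)"
    and p_nonneg: "\<And>x v. x \<in> space J \<Longrightarrow> v \<in> space \<psi> \<Longrightarrow> 0 \<le> p x v"
    and p_dens: "\<And>x. x \<in> space J \<Longrightarrow> (\<integral>\<^sup>+ v. ennreal (p x v) \<partial>\<psi>) = 1"
    and y: "\<And>l. l \<in> {1..n} \<Longrightarrow> y l \<in> space \<psi>"
    and pos: "\<And>j k. 0 < j \<Longrightarrow> j \<le> k \<Longrightarrow> k \<le> n \<Longrightarrow>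
                (\<integral>x. (\<Prod>l\<in>{j..k}. p x (y l)) \<partial>J) > 0"
    and f_meas: "f \<in> borel_measurable J"
    and f_int: "\<And>j k. 1 \<le> k \<Longrightarrow> k \<le> n \<Longrightarrow> j \<le> k \<Longrightarrow> integrable (cp_H q n J p y j k) f"
    and i: "0 < i" "i < n"
  shows "(\<integral>\<omega>. f (cp_X i \<omega>) \<partial>cp_post q n J p y n) =
           (\<integral>\<omega>. f (cp_X (i + 1) \<omega>) \<partial>cp_post q n J p y n)
         - (\<Sum>l\<in>{i + 1..n - 1}. (cp_ct q n J p y (i + 1) l * cp_qt q n J p y (l + 1))
                                   *\<^sub>R (\<integral>x. f x \<partial>cp_H q n J p y (i + 1) l))
         - cp_ct q n J p y (i + 1) n *\<^sub>R (\<integral>x. f x \<partial>cp_H q n J p y (i + 1) n)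
         + (\<Sum>l\<in>{0..i}. (cp_ct q n J p y l i * cp_qt q n J p y (i + 1))
                                   *\<^sub>R (\<integral>x. f x \<partial>cp_H q n J p y l i))"
proof -
  have qok: "qok n q" using q unfolding qok_def by blast
  interpret cpm n q J \<psi> p y
    by (rule cpm.intro[OF n J qok p_meas p_nonneg y pos])
  define T where "T a b = coef a b *\<^sub>R (\<integral>x. f x \<partial>cp_H q n J p y a b)" for a b
  have F: "(\<integral>\<omega>. f (cp_X k \<omega>) \<partial>post n) = (\<Sum>b\<in>{k..n}. \<Sum>a\<in>{0..k}. T a b)" if k: "k \<in> {1..n}" for k
  proof -
    have int: "integrable (post n) (\<lambda>\<omega>. indicator (Aset a b) \<omega> *\<^sub>R f (cp_X b \<omega>))"
      and eq: "(\<integral>\<omega>. indicator (Aset a b) \<omega> *\<^sub>R f (cp_X b \<omega>) \<partial>post n) = T a b"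
      if "b \<in> {k..n}" "a \<in> {0..k}" for a b
    proof -
      have b: "b \<in> {1..n}" using that k by auto
      have fi: "integrable (cp_H q n J p y a b) f" by (rule f_int) (use that k in auto)
      show "integrable (post n) (\<lambda>\<omega>. indicator (Aset a b) \<omega> *\<^sub>R f (cp_X b \<omega>))"
        by (rule term_int(1)[OF b fi f_meas])
      show "(\<integral>\<omega>. indicator (Aset a b) \<omega> *\<^sub>R f (cp_X b \<omega>) \<partial>post n) = T a b"
        unfolding T_def by (rule term_int(2)[OF b fi f_meas])
    qed
    have "(\<integral>\<omega>. f (cp_X k \<omega>) \<partial>post n) = (\<integral>\<omega>. (\<Sum>b\<in>{k..n}. \<Sum>a\<in>{0..k}. indicator (Aset a b) \<omega> *\<^sub>R f (cp_X b \<omega>)) \<partial>post n)"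
    proof (rule Bochner_Integration.integral_cong[OF refl])
      fix \<omega> assume "\<omega> \<in> space (post n)"
      then have w: "\<omega> \<in> space prior" using space_post by simp
      show "f (cp_X k \<omega>) = (\<Sum>b\<in>{k..n}. \<Sum>a\<in>{0..k}. indicator (Aset a b) \<omega> *\<^sub>R f (cp_X b \<omega>))"
        by (rule decomp[OF w k])
    qed
    also have "\<dots> = (\<Sum>b\<in>{k..n}. (\<integral>\<omega>. (\<Sum>a\<in>{0..k}. indicator (Aset a b) \<omega> *\<^sub>R f (cp_X b \<omega>)) \<partial>post n))"
    proof (rule Bochner_Integration.integral_sum)
      fix b assume b: "b \<in> {k..n}"
      show "integrable (post n) (\<lambda>\<omega>. \<Sum>a\<in>{0..k}. indicator (Aset a b) \<omega> *\<^sub>R f (cp_X b \<omega>))"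
        by (rule Bochner_Integration.integrable_sum) (rule int[OF b])
    qed
    also have "\<dots> = (\<Sum>b\<in>{k..n}. \<Sum>a\<in>{0..k}. (\<integral>\<omega>. indicator (Aset a b) \<omega> *\<^sub>R f (cp_X b \<omega>) \<partial>post n))"
      by (intro sum.cong refl Bochner_Integration.integral_sum) (use int in auto)
    also have "\<dots> = (\<Sum>b\<in>{k..n}. \<Sum>a\<in>{0..k}. T a b)"
      by (intro sum.cong refl) (use eq in auto)
    finally show ?thesis .
  qed
  have Fi: "(\<integral>\<omega>. f (cp_X i \<omega>) \<partial>post n) = (\<Sum>a\<in>{0..i}. T a i) + (\<Sum>b\<in>{Suc i..n}. \<Sum>a\<in>{0..i}. T a b)"
    using F[of i] i by (simp add: sum.atLeast_Suc_atMost)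
  have Fi1: "(\<integral>\<omega>. f (cp_X (i + 1) \<omega>) \<partial>post n) = (\<Sum>b\<in>{Suc i..n}. \<Sum>a\<in>{0..i}. T a b) + (\<Sum>b\<in>{Suc i..n}. T (Suc i) b)"
    using F[of "i + 1"] i by (simp add: sum.distrib)
  obtain n' where n': "n = Suc n'" using i by (cases n) auto
  have split: "(\<Sum>b\<in>{Suc i..n}. T (Suc i) b) = (\<Sum>b\<in>{Suc i..n - 1}. T (Suc i) b) + T (Suc i) n"
    using i n' by (simp add: sum.cl_ivl_Suc)
  have T1: "(\<Sum>b\<in>{Suc i..n - 1}. T (Suc i) b) = (\<Sum>l\<in>{i + 1..n - 1}. (cp_ct q n J p y (i + 1) l * cp_qt q n J p y (l + 1))
                                   *\<^sub>R (\<integral>x. f x \<partial>cp_H q n J p y (i + 1) l))"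
    by (intro sum.cong) (auto simp: T_def coef_def)
  have T2: "T (Suc i) n = cp_ct q n J p y (i + 1) n *\<^sub>R (\<integral>x. f x \<partial>cp_H q n J p y (i + 1) n)"
    by (simp add: T_def coef_def)
  have T3: "(\<Sum>a\<in>{0..i}. T a i) = (\<Sum>l\<in>{0..i}. (cp_ct q n J p y l i * cp_qt q n J p y (i + 1))
                                   *\<^sub>R (\<integral>x. f x \<partial>cp_H q n J p y l i))"
    using i by (intro sum.cong) (auto simp: T_def coef_def)
  show ?thesis
    unfolding Fi Fi1 T1[symmetric] T2[symmetric] T3[symmetric] split
    by (rule grp_id)
qed


end
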